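(* Let $w\in W_0^J$ and $\beta\in\Delta_0^+\setminus\Delta_J^+$ be such that there is an edge $\lfloor wr_\beta\rfloor\xleftarrow{\beta}w$ in the parabolic quantum Bruhat graph. Let $j\in I_0$. (1) If $\langle w\Lambda,\alpha_j^\vee\rangle>0$ and $w\beta\ne\pm\alpha_j$, then $\langle wr_\beta\Lambda,\alpha_j^\vee\rangle>0$; moreover both $r_j\lfloor wr_\beta\rfloor$ and $r_jw$ lie in $W_0^J$, and there is an edge $r_j\lfloor wr_\beta\rfloor\xleftarrow{\beta}r_jw$. (2) If $\langle wr_\beta\Lambda,\alpha_j^\vee\rangle<0$ and $w\beta\ne\pm\alpha_j$, then $\langle w\Lambda,\alpha_j^\vee\rangle<0$; moreover both $r_j\lfloor wr_\beta\rfloor$ and $r_jw$ lie in $W_0^J$, and there is an edge $r_j\lfloor wr_\beta\rfloor\xleftarrow{\beta}r_jw$. (3) If $\langle wr_\beta\Lambda,\alpha_j^\vee\rangle<0$ and $\langle w\Lambda,\alpha_j^\vee\rangle\ge0$, then $w\beta=\pm\alpha_j$. (4) If $\langle wr_\beta\Lambda,\alpha_j^\vee\rangle\le0$ and $\langle w\Lambda,\alpha_j^\vee\rangle>0$, then $w\beta=\pm\alpha_j$.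
   Context: Let $\Delta_0$ be the (finite, reduced, irreducible) root system of the finite-dimensional simple Lie algebra underlying an untwisted affine Lie algebra, with simple roots $\alpha_j$, simple coroots $\alpha_j^\vee$ ($j\in I_0$), positive roots $\Delta_0^+$, Weyl group $W_0$ generated by simple reflections $r_j$. Let $\lambda=\sum_{i\in I_0}m_i\varpi_i$ ($m_i\in\mathbb{Z}_{\ge0}$) be a level-zero dominant integral weight and $\Lambda=\mathrm{cl}(\lambda)$ its image modulo $\mathbb{C}\delta$, so $\langle\Lambda,\alpha_j^\vee\rangle=m_j$ for $j\in I_0$; $W_0$ acts on $\Lambda$. Let $J=\{j\in I_0\mid\langle\Lambda,\alpha_j^\vee\rangle=0\}$, $W_J=\langle r_j\mid j\in J\rangle$, $\Delta_J^+=\Delta_0^+\cap\bigoplus_{j\in J}\mathbb{Z}\alpha_j$, $W_0^J$ the set of minimal-length representatives of $W_0/W_J$, $\lfloor w\rfloor\in W_0^J$ the representative of $wW_J$, $\ell$ the length, $\rho=\frac12\sum_{\alpha\in\Delta_0^+}\alpha$, $\rho_J=\frac12\sum_{\alpha\in\Delta_J^+}\alpha$. The parabolic quantum Bruhat graph has vertex set $W_0^J$ and a directed edge $\lfloor wr_\beta\rfloor\xleftarrow{\beta}w$ for $w\in W_0^J$, $\beta\in\Delta_0^+\setminus\Delta_J^+$, whenever either $\ell(\lfloor wr_\beta\rfloor)=\ell(w)+1$ (Bruhat edge) or $\ell(\lfloor wr_\beta\rfloor)=\ell(w)-2\langle\rho-\rho_J,\beta^\vee\rangle+1$ (quantum edge).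 *)

theory Defs
  imports "HOL-Analysis.Analysis"
begin

text \<open>Reflection in the hyperplane orthogonal to a, and the pairing with the coroot:
  pairing x a = <x, a^vee> = 2 (x,a)/(a,a).\<close>

definition refl :: "'a::euclidean_space \<Rightarrow> 'a \<Rightarrow> 'a" where
  "refl a x = x - (2 * (x \<bullet> a) / (a \<bullet> a)) *\<^sub>R a"

definition pairing :: "'a::euclidean_space \<Rightarrow> 'a \<Rightarrow> real" where
  "pairing x a = 2 * (x \<bullet> a) / (a \<bullet> a)"

definition root_system :: "'a::euclidean_space set \<Rightarrow> bool" where
  "root_system R \<longleftrightarrow>
     finite R \<and> 0 \<notin> R \<and> span R = UNIV \<and>
     (\<forall>a\<in>R. refl a ` R = R) \<and>
     (\<forall>a\<in>R. \<forall>b\<in>R. pairing b a \<in> \<int>) \<and>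
     (\<forall>a\<in>R. \<forall>c::real. c *\<^sub>R a \<in> R \<longrightarrow> c = 1 \<or> c = -1)"

definition irreducible_rs :: "'a::euclidean_space set \<Rightarrow> bool" where
  "irreducible_rs R \<longleftrightarrow>
     \<not> (\<exists>A B. A \<union> B = R \<and> A \<inter> B = {} \<and> A \<noteq> {} \<and> B \<noteq> {} \<and>
            (\<forall>a\<in>A. \<forall>b\<in>B. a \<bullet> b = 0))"

definition is_base :: "'a::euclidean_space set \<Rightarrow> 'i set \<Rightarrow> ('i \<Rightarrow> 'a) \<Rightarrow> bool" where
  "is_base R I alpha \<longleftrightarrow>
     finite I \<and> alpha ` I \<subseteq> R \<and> inj_on alpha I \<and> independent (alpha ` I) \<and>
     (\<forall>b\<in>R. \<exists>c::'i \<Rightarrow> int. ((\<forall>i\<in>I. c i \<ge> 0) \<or> (\<forall>i\<in>I. c i \<le> 0)) \<and>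
              b = (\<Sum>i\<in>I. of_int (c i) *\<^sub>R alpha i))"

definition pos_roots :: "'a::euclidean_space set \<Rightarrow> 'i set \<Rightarrow> ('i \<Rightarrow> 'a) \<Rightarrow> 'a set" where
  "pos_roots R I alpha =
     {b\<in>R. \<exists>c::'i \<Rightarrow> int. (\<forall>i\<in>I. c i \<ge> 0) \<and> b = (\<Sum>i\<in>I. of_int (c i) *\<^sub>R alpha i)}"

definition pos_roots_J :: "'a::euclidean_space set \<Rightarrow> 'i set \<Rightarrow> ('i \<Rightarrow> 'a) \<Rightarrow> 'i set \<Rightarrow> 'a set" where
  "pos_roots_J R I alpha J =
     {b\<in>pos_roots R I alpha. \<exists>c::'i \<Rightarrow> int. b = (\<Sum>j\<in>J. of_int (c j) *\<^sub>R alpha j)}"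

definition word :: "('i \<Rightarrow> 'a::euclidean_space) \<Rightarrow> 'i list \<Rightarrow> 'a \<Rightarrow> 'a" where
  "word alpha is = foldr (\<lambda>i f. refl (alpha i) \<circ> f) is id"

definition weyl_gen :: "('i \<Rightarrow> 'a::euclidean_space) \<Rightarrow> 'i set \<Rightarrow> ('a \<Rightarrow> 'a) set" where
  "weyl_gen alpha K = {word alpha is | is. set is \<subseteq> K}"

definition wlen :: "('i \<Rightarrow> 'a::euclidean_space) \<Rightarrow> 'i set \<Rightarrow> ('a \<Rightarrow> 'a) \<Rightarrow> nat" where
  "wlen alpha I w = (LEAST n. \<exists>is. set is \<subseteq> I \<and> length is = n \<and> w = word alpha is)"

definition Jset :: "('i \<Rightarrow> 'a::euclidean_space) \<Rightarrow> 'i set \<Rightarrow> 'a \<Rightarrow> 'i set" where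
  "Jset alpha I Lam = {j\<in>I. pairing Lam (alpha j) = 0}"

definition minreps :: "('i \<Rightarrow> 'a::euclidean_space) \<Rightarrow> 'i set \<Rightarrow> 'i set \<Rightarrow> ('a \<Rightarrow> 'a) set" where
  "minreps alpha I J = {w\<in>weyl_gen alpha I.
      \<forall>v\<in>weyl_gen alpha J. wlen alpha I w \<le> wlen alpha I (w \<circ> v)}"

definition minrep :: "('i \<Rightarrow> 'a::euclidean_space) \<Rightarrow> 'i set \<Rightarrow> 'i set \<Rightarrow> ('a \<Rightarrow> 'a) \<Rightarrow> ('a \<Rightarrow> 'a)" where
  "minrep alpha I J w = (THE u. u \<in> minreps alpha I J \<and> (\<exists>v\<in>weyl_gen alpha J. u = w \<circ> v))"

definition rho :: "'a::euclidean_space set \<Rightarrow> 'i set \<Rightarrow> ('i \<Rightarrow> 'a) \<Rightarrow> 'a" where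
  "rho R I alpha = (1/2) *\<^sub>R (\<Sum>b\<in>pos_roots R I alpha. b)"

definition rho_J :: "'a::euclidean_space set \<Rightarrow> 'i set \<Rightarrow> ('i \<Rightarrow> 'a) \<Rightarrow> 'i set \<Rightarrow> 'a" where
  "rho_J R I alpha J = (1/2) *\<^sub>R (\<Sum>b\<in>pos_roots_J R I alpha J. b)"

text \<open>Edge  minrep(w r_b) <--b-- w  in the parabolic quantum Bruhat graph; the third
  argument is the target vertex, which must equal minrep(w r_b).\<close>

definition pqbg_edge :: "'a::euclidean_space set \<Rightarrow> 'i set \<Rightarrow> ('i \<Rightarrow> 'a) \<Rightarrow> 'i set \<Rightarrow>
    ('a \<Rightarrow> 'a) \<Rightarrow> 'a \<Rightarrow> ('a \<Rightarrow> 'a) \<Rightarrow> bool" where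
  "pqbg_edge R I alpha J w b u \<longleftrightarrow>
     w \<in> minreps alpha I J \<and>
     b \<in> pos_roots R I alpha - pos_roots_J R I alpha J \<and>
     u = minrep alpha I J (w \<circ> refl b) \<and>
     (wlen alpha I u = wlen alpha I w + 1 \<or>
      real (wlen alpha I u) = real (wlen alpha I w)
          - 2 * pairing (rho R I alpha - rho_J R I alpha J) b + 1)"

end

theory Submission
  imports Defs
begin

section \<open>Reflections\<close>

lemma refl_linear: "linear (refl a)"
  unfolding refl_def by (auto simp: linear_iff inner_add_left algebra_simps add_divide_distrib scaleR_add_left)

lemma refl_add: "refl a (x + y) = refl a x + refl a y"
  using refl_linear linear_add by blast
lemma refl_scale: "refl a (c *\<^sub>R x) = c *\<^sub>R refl a x"
  using refl_linear linear_scale by blast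
lemma refl_minus: "refl a (- x) = - refl a x"
  using refl_linear linear_neg by blast
lemma refl_diff: "refl a (x - y) = refl a x - refl a y"
  using refl_linear linear_diff by blast

lemma refl_inner_left: "refl a x \<bullet> y = x \<bullet> y - pairing x a * (a \<bullet> y)"
  unfolding refl_def pairing_def by (simp add: inner_diff_left)

lemma refl_sym: "refl a x \<bullet> y = x \<bullet> refl a y"
  unfolding refl_def by (simp add: inner_diff_left inner_diff_right inner_commute)

lemma refl_self: "a \<noteq> 0 \<Longrightarrow> refl a a = - a"
  unfolding refl_def by (simp add: algebra_simps) (simp add: scaleR_2 )

lemma pairing_refl: "a \<noteq> 0 \<Longrightarrow> pairing (refl a x) a = - pairing x a"
  unfolding pairing_def using refl_sym[of a x a] by (simp add: refl_self)

lemma refl_pairing: "refl a x = x - pairing x a *\<^sub>R a"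
  unfolding refl_def pairing_def by simp

lemma refl_refl: "a \<noteq> 0 \<Longrightarrow> refl a (refl a x) = x"
  using refl_pairing[of a "refl a x"] refl_pairing[of a x] pairing_refl[of a x] by simp

lemma refl_inner: "a \<noteq> 0 \<Longrightarrow> refl a x \<bullet> refl a y = x \<bullet> y"
  by (simp add: refl_sym refl_refl)

lemma refl_uminus_root: "refl (- a) = refl a"
  unfolding refl_def by (rule ext) simp

lemma refl_conj:
  assumes "linear f" "\<And>x y. f x \<bullet> f y = x \<bullet> y"
  shows "refl (f a) (f x) = f (refl a x)"
  unfolding refl_def using assms by (simp add: linear_diff linear_scale)

lemma word_Nil[simp]: "word alpha [] = id" by (simp add: word_def)
lemma word_Cons[simp]: "word alpha (i # is) = refl (alpha i) \<circ> word alpha is"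
  by (simp add: word_def)
lemma word_append: "word alpha (is @ js) = word alpha is \<circ> word alpha js"
  by (induction "is") auto

lemma word_linear: "linear (word alpha is)"
proof (induction "is")
  case Nil then show ?case using linear_id by (simp add: id_def)
next
  case (Cons i "is") show ?case unfolding word_Cons by (rule linear_compose[OF Cons.IH refl_linear])
qed

lemma word_inner: "(\<And>i. i \<in> set is \<Longrightarrow> alpha i \<noteq> 0) \<Longrightarrow> word alpha is x \<bullet> word alpha is y = x \<bullet> y"
  by (induction "is" arbitrary: x y) (auto simp: refl_inner)

lemma word_rev: "(\<And>i. i \<in> set is \<Longrightarrow> alpha i \<noteq> 0) \<Longrightarrow> word alpha is \<circ> word alpha (rev is) = id"
proof (induction "is")
  case Nil then show ?case by simp
next
  case (Cons i "is")
  have "word alpha (i # is) \<circ> word alpha (rev (i # is)) = refl (alpha i) \<circ> (word alpha is \<circ> word alpha (rev is)) \<circ> refl (alpha i)"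
    by (simp add: word_append comp_assoc)
  also have "\<dots> = id" using Cons by (auto simp: fun_eq_iff refl_refl)
  finally show ?case .
qed

lemma word_rev2: "(\<And>i. i \<in> set is \<Longrightarrow> alpha i \<noteq> 0) \<Longrightarrow> word alpha (rev is) \<circ> word alpha is = id"
  using word_rev[of "rev is" alpha] by simp

locale rsys =
  fixes R :: "'a::euclidean_space set" and I :: "'i set" and alpha :: "'i \<Rightarrow> 'a"
  assumes rs: "root_system R" and base: "is_base R I alpha"
begin

lemma finR: "finite R" using rs by (simp add: root_system_def)
lemma zero_notin: "0 \<notin> R" using rs by (simp add: root_system_def)
lemma reflR: "a \<in> R \<Longrightarrow> refl a ` R = R" using rs by (simp add: root_system_def)
lemma intpair: "a \<in> R \<Longrightarrow> b \<in> R \<Longrightarrow> pairing b a \<in> \<int>" using rs by (simp add: root_system_def)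
lemma reduced: "a \<in> R \<Longrightarrow> c *\<^sub>R a \<in> R \<Longrightarrow> c = 1 \<or> c = -1" using rs by (simp add: root_system_def)
lemma finI: "finite I" using base by (simp add: is_base_def)
lemma alphaR: "i \<in> I \<Longrightarrow> alpha i \<in> R" using base by (auto simp add: is_base_def)
lemma alpha_inj: "inj_on alpha I" using base by (simp add: is_base_def)
lemma indep: "independent (alpha ` I)" using base by (simp add: is_base_def)
lemma rep: "b \<in> R \<Longrightarrow> \<exists>c::'i \<Rightarrow> int. ((\<forall>i\<in>I. c i \<ge> 0) \<or> (\<forall>i\<in>I. c i \<le> 0)) \<and>
              b = (\<Sum>i\<in>I. of_int (c i) *\<^sub>R alpha i)" using base by (simp add: is_base_def)

lemma nzR: "a \<in> R \<Longrightarrow> a \<noteq> 0" using zero_notin by auto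
lemma sqpos: "a \<in> R \<Longrightarrow> a \<bullet> a > 0" using nzR by simp
lemma alpha_nz: "i \<in> I \<Longrightarrow> alpha i \<noteq> 0" using alphaR nzR by auto
lemma reflR_mem: "a \<in> R \<Longrightarrow> b \<in> R \<Longrightarrow> refl a b \<in> R" using reflR by blast
lemma negR: "a \<in> R \<Longrightarrow> - a \<in> R" by (metis reflR_mem refl_self nzR)

definition ht :: "'a \<Rightarrow> real" where
  "ht = (SOME g. linear g \<and> (\<forall>i\<in>I. g (alpha i) = (1::real)))"

lemma ht_ex: "linear ht \<and> (\<forall>i\<in>I. ht (alpha i) = 1)"
proof -
  obtain g :: "'a \<Rightarrow> real" where "linear g" "\<forall>x\<in>alpha ` I. g x = 1"
    using linear_independent_extend[OF indep, of "\<lambda>_. (1::real)"] by blast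
  then have "\<exists>g. linear g \<and> (\<forall>i\<in>I. g (alpha i) = (1::real))" by auto
  then show ?thesis unfolding ht_def by (rule someI_ex)
qed

lemma ht_linear: "linear ht" using ht_ex by blast
lemma ht_alpha: "i \<in> I \<Longrightarrow> ht (alpha i) = 1" using ht_ex by blast
lemma ht_add: "ht (x + y) = ht x + ht y" using ht_linear linear_add by blast
lemma ht_diff: "ht (x - y) = ht x - ht y" using ht_linear linear_diff by blast
lemma ht_neg: "ht (- x) = - ht x" using ht_linear linear_neg by blast
lemma ht_scale: "ht (c *\<^sub>R x) = c * ht x" using ht_linear linear_scale by (metis real_scaleR_def)

lemma ht_sum: "ht (\<Sum>i\<in>I. c i *\<^sub>R alpha i) = (\<Sum>i\<in>I. c i)"
proof -
  have "ht (\<Sum>i\<in>I. c i *\<^sub>R alpha i) = (\<Sum>i\<in>I. ht (c i *\<^sub>R alpha i))"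
    using linear_sum[OF ht_linear] by blast
  also have "\<dots> = (\<Sum>i\<in>I. c i)" by (rule sum.cong) (auto simp: ht_scale ht_alpha)
  finally show ?thesis .
qed

lemma indep0:
  assumes "(\<Sum>i\<in>I. d i *\<^sub>R alpha i) = 0" "i \<in> I"
  shows "d i = 0"
proof (rule ccontr)
  assume "d i \<noteq> 0"
  define u where "u v = d (the_inv_into I alpha v)" for v
  have "(\<Sum>v\<in>alpha ` I. u v *\<^sub>R v) = (\<Sum>m\<in>I. u (alpha m) *\<^sub>R alpha m)"
    by (rule sum.reindex[OF alpha_inj, unfolded comp_def])
  also have "\<dots> = (\<Sum>m\<in>I. d m *\<^sub>R alpha m)"
    by (rule sum.cong) (auto simp: u_def the_inv_into_f_f[OF alpha_inj])
  finally have "(\<Sum>v\<in>alpha ` I. u v *\<^sub>R v) = 0" using assms by simp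
  moreover have "u (alpha i) \<noteq> 0" using \<open>d i \<noteq> 0\<close> assms(2)
    by (simp add: u_def the_inv_into_f_f[OF alpha_inj])
  ultimately have "dependent (alpha ` I)"
    using dependent_finite[of "alpha ` I"] finI assms(2) by auto
  then show False using indep by simp
qed

lemma rep_ht:
  assumes "b \<in> R"
  obtains c :: "'i \<Rightarrow> int" where "b = (\<Sum>i\<in>I. of_int (c i) *\<^sub>R alpha i)"
    "ht b > 0 \<and> (\<forall>i\<in>I. c i \<ge> 0) \<or> ht b < 0 \<and> (\<forall>i\<in>I. c i \<le> 0)"
proof -
  obtain c :: "'i \<Rightarrow> int" where c: "(\<forall>i\<in>I. c i \<ge> 0) \<or> (\<forall>i\<in>I. c i \<le> 0)"
    "b = (\<Sum>i\<in>I. of_int (c i) *\<^sub>R alpha i)" using rep[OF assms] by blast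
  have htb: "ht b = (\<Sum>i\<in>I. real_of_int (c i))" using c(2) ht_sum by simp
  have ex: "\<exists>i\<in>I. c i \<noteq> 0"
  proof (rule ccontr)
    assume "\<not> ?thesis"
    then have "b = 0" using c(2) by simp
    then show False using assms zero_notin by simp
  qed
  then obtain k where k: "k \<in> I" "c k \<noteq> 0" by blast
  show ?thesis
  proof (cases "\<forall>i\<in>I. c i \<ge> 0")
    case True
    have "real_of_int (c k) \<le> (\<Sum>i\<in>I. real_of_int (c i))"
      using True k finI by (intro member_le_sum) auto
    moreover have "c k > 0" using True k by force
    ultimately have "ht b > 0" using htb by simp
    then show ?thesis using that c True by blast
  next
    case False
    then have F: "\<forall>i\<in>I. c i \<le> 0" using c(1) by blast
    have "(\<Sum>i\<in>I. - real_of_int (c i)) \<ge> - real_of_int (c k)"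
      using F k finI by (intro member_le_sum) auto
    moreover have "c k < 0" using F k by force
    ultimately have "ht b < 0" using htb by (simp add: sum_negf)
    then show ?thesis using that c F by blast
  qed
qed

lemma ht_nz: "b \<in> R \<Longrightarrow> ht b \<noteq> 0"
  by (rule rep_ht) auto

lemma pos_rep: "b \<in> R \<Longrightarrow> ht b > 0 \<Longrightarrow>
   \<exists>c::'i\<Rightarrow>int. (\<forall>i\<in>I. c i \<ge> 0) \<and> b = (\<Sum>i\<in>I. of_int (c i) *\<^sub>R alpha i)"
  by (rule rep_ht) auto

lemma neg_rep: "b \<in> R \<Longrightarrow> ht b < 0 \<Longrightarrow>
   \<exists>c::'i\<Rightarrow>int. (\<forall>i\<in>I. c i \<le> 0) \<and> b = (\<Sum>i\<in>I. of_int (c i) *\<^sub>R alpha i)"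
  by (rule rep_ht) auto

lemma ht_int: "b \<in> R \<Longrightarrow> ht b \<in> \<int>"
proof -
  assume "b \<in> R"
  then obtain c :: "'i\<Rightarrow>int" where "b = (\<Sum>i\<in>I. of_int (c i) *\<^sub>R alpha i)" using rep by blast
  then have "ht b = (\<Sum>i\<in>I. real_of_int (c i))" using ht_sum by simp
  then show ?thesis by (metis Ints_of_int of_int_sum)
qed

lemma pos_roots_eq: "pos_roots R I alpha = {b \<in> R. ht b > 0}"
proof -
  { fix b c assume b: "b \<in> R" and c: "\<forall>i\<in>I. (c::'i\<Rightarrow>int) i \<ge> 0" "b = (\<Sum>i\<in>I. of_int (c i) *\<^sub>R alpha i)"
    have "ht b = (\<Sum>i\<in>I. real_of_int (c i))" using c ht_sum by simp
    also have "\<dots> \<ge> 0" using c by (intro sum_nonneg) auto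
    finally have "ht b > 0" using ht_nz[OF b] by linarith }
  note X = this
  show ?thesis unfolding pos_roots_def
  proof (rule set_eqI, rule iffI)
    fix b assume "b \<in> {b \<in> R. \<exists>c::'i\<Rightarrow>int. (\<forall>i\<in>I. 0 \<le> c i) \<and> b = (\<Sum>i\<in>I. of_int (c i) *\<^sub>R alpha i)}"
    then show "b \<in> {b \<in> R. ht b > 0}" using X by blast
  next
    fix b assume "b \<in> {b \<in> R. ht b > 0}"
    then show "b \<in> {b \<in> R. \<exists>c::'i\<Rightarrow>int. (\<forall>i\<in>I. 0 \<le> c i) \<and> b = (\<Sum>i\<in>I. of_int (c i) *\<^sub>R alpha i)}"
      using pos_rep by blast
  qed
qed

lemma simple_pos:
  assumes i: "i \<in> I" and g: "g \<in> R" "ht g > 0" "g \<noteq> alpha i"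
  shows "ht (refl (alpha i) g) > 0"
proof (rule ccontr)
  let ?d = "refl (alpha i) g"
  assume nt: "\<not> ?thesis"
  have dR: "?d \<in> R" using reflR_mem alphaR i g by blast
  then have "ht ?d < 0" using ht_nz nt by force
  obtain c :: "'i\<Rightarrow>int" where c: "\<forall>m\<in>I. c m \<ge> 0" "g = (\<Sum>m\<in>I. of_int (c m) *\<^sub>R alpha m)"
    using pos_rep g by blast
  obtain e :: "'i\<Rightarrow>int" where e: "\<forall>m\<in>I. e m \<le> 0" "?d = (\<Sum>m\<in>I. of_int (e m) *\<^sub>R alpha m)"
    using neg_rep[OF dR \<open>ht ?d < 0\<close>] by blast
  define p where "p = pairing g (alpha i)"
  have dp: "?d = g - p *\<^sub>R alpha i" by (simp add: refl_pairing p_def)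
  define d where "d m = real_of_int (c m) - real_of_int (e m) - (if m = i then p else 0)" for m
  have s3: "(\<Sum>m\<in>I. (if m = i then p else 0) *\<^sub>R alpha m) = p *\<^sub>R alpha i"
  proof -
    have "(\<Sum>m\<in>I. (if m = i then p else 0) *\<^sub>R alpha m) = (\<Sum>m\<in>I. if m = i then p *\<^sub>R alpha m else 0)"
      by (rule sum.cong) auto
    also have "\<dots> = p *\<^sub>R alpha i" using i finI by (simp add: sum.delta)
    finally show ?thesis .
  qed
  have "(\<Sum>m\<in>I. d m *\<^sub>R alpha m) = (\<Sum>m\<in>I. of_int (c m) *\<^sub>R alpha m) - (\<Sum>m\<in>I. of_int (e m) *\<^sub>R alpha m)
       - (\<Sum>m\<in>I. (if m = i then p else 0) *\<^sub>R alpha m)"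
    by (simp add: d_def scaleR_diff_left sum_subtractf)
  also have "\<dots> = 0" using c(2) e(2) dp s3 by simp
  finally have d0: "\<And>m. m \<in> I \<Longrightarrow> d m = 0" using indep0 by blast
  have cz: "\<And>m. m \<in> I \<Longrightarrow> m \<noteq> i \<Longrightarrow> c m = 0"
  proof -
    fix m assume m: "m \<in> I" "m \<noteq> i"
    then have "real_of_int (c m) = real_of_int (e m)" using d0[OF m(1)] by (simp add: d_def)
    then have "c m = e m" by simp
    then show "c m = 0" using c(1) e(1) m by force
  qed
  have "g = of_int (c i) *\<^sub>R alpha i + (\<Sum>m\<in>I - {i}. of_int (c m) *\<^sub>R alpha m)"
    using c(2) sum.remove[OF finI i] by simp
  also have "(\<Sum>m\<in>I - {i}. of_int (c m) *\<^sub>R alpha m) = 0"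
    by (rule sum.neutral) (auto simp: cz)
  finally have gi: "g = real_of_int (c i) *\<^sub>R alpha i" by simp
  then have "real_of_int (c i) = 1 \<or> real_of_int (c i) = -1" using reduced alphaR i g(1) by metis
  then show False
  proof
    assume "real_of_int (c i) = 1" then show False using gi g(3) by simp
  next
    assume "real_of_int (c i) = -1" then have "ht g = -1" using gi ht_scale ht_alpha i ht_neg by simp
    then show False using g(2) by simp
  qed
qed

lemma simple_neg: "i \<in> I \<Longrightarrow> g \<in> R \<Longrightarrow> ht g > 0 \<Longrightarrow> ht (refl (alpha i) g) < 0 \<Longrightarrow> g = alpha i"
  using simple_pos by force

subsection \<open>Words acting on roots\<close>

lemma word_nz: "set is \<subseteq> I \<Longrightarrow> i \<in> set is \<Longrightarrow> alpha i \<noteq> 0" using alpha_nz by auto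

lemma word_R: "set is \<subseteq> I \<Longrightarrow> a \<in> R \<Longrightarrow> word alpha is a \<in> R"
  by (induction "is") (auto intro: reflR_mem alphaR)

lemma word_innerI: "set is \<subseteq> I \<Longrightarrow> word alpha is x \<bullet> word alpha is y = x \<bullet> y"
  by (rule word_inner) (metis alpha_nz subsetD)

lemma word_inv: "set is \<subseteq> I \<Longrightarrow> word alpha (rev is) (word alpha is x) = x"
  using word_rev2[of "is" alpha] word_nz by (auto simp: fun_eq_iff)

lemma word_inv2: "set is \<subseteq> I \<Longrightarrow> word alpha is (word alpha (rev is) x) = x"
  using word_rev[of "is" alpha] word_nz by (auto simp: fun_eq_iff)

lemma word_inj: "set is \<subseteq> I \<Longrightarrow> inj (word alpha is)"
  by (metis injI word_inv)

lemma word_image: "set is \<subseteq> I \<Longrightarrow> word alpha is ` R = R"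
proof
  assume "set is \<subseteq> I" then show "word alpha is ` R \<subseteq> R" using word_R by blast
next
  assume s: "set is \<subseteq> I"
  show "R \<subseteq> word alpha is ` R"
  proof
    fix a assume "a \<in> R"
    then have "word alpha (rev is) a \<in> R" using word_R s by simp
    then show "a \<in> word alpha is ` R" using word_inv2[OF s] by (metis image_eqI)
  qed
qed

definition Inv :: "('a \<Rightarrow> 'a) \<Rightarrow> 'a set" where
  "Inv x = {a \<in> R. ht a > 0 \<and> ht (x a) < 0}"

lemma Inv_fin: "finite (Inv x)" using finR by (simp add: Inv_def)

lemma Inv_left:
  assumes s: "set is \<subseteq> I" and i: "i \<in> I"
  shows "card (Inv (refl (alpha i) \<circ> word alpha is)) \<le> card (Inv (word alpha is)) + 1"
proof -
  let ?x = "word alpha is"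
  have sub: "Inv (refl (alpha i) \<circ> ?x) \<subseteq> Inv ?x \<union> {a \<in> R. ?x a = alpha i}"
  proof
    fix a assume a: "a \<in> Inv (refl (alpha i) \<circ> ?x)"
    then have aR: "a \<in> R" "ht a > 0" "ht (refl (alpha i) (?x a)) < 0" by (auto simp: Inv_def)
    have xa: "?x a \<in> R" using word_R s aR by blast
    show "a \<in> Inv ?x \<union> {a \<in> R. ?x a = alpha i}"
    proof (cases "ht (?x a) < 0")
      case True then show ?thesis using aR by (simp add: Inv_def)
    next
      case False
      then have "ht (?x a) > 0" using ht_nz[OF xa] by linarith
      then have "?x a = alpha i" using simple_neg[OF i xa] aR by blast
      then show ?thesis using aR by simp
    qed
  qed
  have c1: "card {a \<in> R. ?x a = alpha i} \<le> 1"
    using word_inj[OF s] finR by (auto simp: card_le_Suc0_iff_eq inj_def)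
  have "card (Inv (refl (alpha i) \<circ> ?x)) \<le> card (Inv ?x \<union> {a \<in> R. ?x a = alpha i})"
    by (rule card_mono) (use sub finR Inv_fin in auto)
  also have "\<dots> \<le> card (Inv ?x) + card {a \<in> R. ?x a = alpha i}" by (rule card_Un_le)
  finally show ?thesis using c1 by simp
qed

lemma Inv_le_len: "set is \<subseteq> I \<Longrightarrow> card (Inv (word alpha is)) \<le> length is"
proof (induction "is")
  case Nil
  have "Inv id = {}" by (auto simp: Inv_def)
  then show ?case by (simp add: id_def)
next
  case (Cons i "is")
  then have "card (Inv (word alpha (i # is))) \<le> card (Inv (word alpha is)) + 1"
    using Inv_left by simp
  then show ?case using Cons by (simp add: comp_def)
qed

lemma Inv_right:
  assumes i: "i \<in> I" and lx: "linear x"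
  shows "Inv (x \<circ> refl (alpha i)) - {alpha i} = refl (alpha i) ` (Inv x - {alpha i})"
    and "alpha i \<in> Inv (x \<circ> refl (alpha i)) \<longleftrightarrow> ht (x (alpha i)) > 0"
    and "alpha i \<in> Inv x \<longleftrightarrow> ht (x (alpha i)) < 0"
proof -
  let ?s = "refl (alpha i)"
  have aR: "alpha i \<in> R" using alphaR i by simp
  have an: "alpha i \<noteq> 0" using alpha_nz i by simp
  show "Inv (x \<circ> ?s) - {alpha i} = ?s ` (Inv x - {alpha i})"
  proof
    show "Inv (x \<circ> ?s) - {alpha i} \<subseteq> ?s ` (Inv x - {alpha i})"
    proof
      fix a assume a: "a \<in> Inv (x \<circ> ?s) - {alpha i}"
      then have a1: "a \<in> R" "ht a > 0" "a \<noteq> alpha i" "ht (x (?s a)) < 0" by (auto simp: Inv_def)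
      have bR: "?s a \<in> R" using reflR_mem[OF aR a1(1)] .
      have bp: "ht (?s a) > 0" using simple_pos[OF i a1(1-3)] .
      have bn: "?s a \<noteq> alpha i"
      proof
        assume "?s a = alpha i"
        then have "a = ?s (alpha i)" using refl_refl[OF an] by metis
        then have "a = - alpha i" using refl_self[OF an] by simp
        then show False using a1(2) ht_alpha i ht_neg by simp
      qed
      have "?s a \<in> Inv x - {alpha i}" using bR bp bn a1 by (simp add: Inv_def)
      moreover have "a = ?s (?s a)" using refl_refl[OF an] by simp
      ultimately show "a \<in> ?s ` (Inv x - {alpha i})" by blast
    qed
  next
    show "?s ` (Inv x - {alpha i}) \<subseteq> Inv (x \<circ> ?s) - {alpha i}"
    proof
      fix a assume "a \<in> ?s ` (Inv x - {alpha i})"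
      then obtain b where b: "b \<in> R" "ht b > 0" "b \<noteq> alpha i" "ht (x b) < 0" "a = ?s b"
        by (auto simp: Inv_def)
      have "a \<in> R" using reflR_mem[OF aR b(1)] b(5) by simp
      moreover have "ht a > 0" using simple_pos[OF i b(1-3)] b(5) by simp
      moreover have "a \<noteq> alpha i"
      proof
        assume "a = alpha i"
        then have "b = ?s (alpha i)" using refl_refl[OF an] b(5) by metis
        then have "b = - alpha i" using refl_self[OF an] by simp
        then show False using b(2) ht_alpha i ht_neg by simp
      qed
      moreover have "x (?s a) = x b" using b(5) refl_refl[OF an] by simp
      ultimately show "a \<in> Inv (x \<circ> ?s) - {alpha i}" using b(4) by (simp add: Inv_def)
    qed
  qed
  show "alpha i \<in> Inv (x \<circ> ?s) \<longleftrightarrow> ht (x (alpha i)) > 0"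
    using aR ht_alpha[OF i] refl_self[OF an] linear_neg[OF lx] by (simp add: Inv_def ht_neg)
  show "alpha i \<in> Inv x \<longleftrightarrow> ht (x (alpha i)) < 0"
    using aR ht_alpha[OF i] by (simp add: Inv_def)
qed

lemma refl_inj: "a \<noteq> 0 \<Longrightarrow> inj (refl a)"
  by (metis injI refl_refl)

lemma Inv_right_card:
  assumes i: "i \<in> I" and lx: "linear x"
  shows "ht (x (alpha i)) > 0 \<Longrightarrow> card (Inv (x \<circ> refl (alpha i))) = card (Inv x) + 1"
    and "ht (x (alpha i)) < 0 \<Longrightarrow> card (Inv (x \<circ> refl (alpha i))) + 1 = card (Inv x)"
proof -
  let ?A = "Inv (x \<circ> refl (alpha i))" and ?B = "Inv x"
  have e: "card (?A - {alpha i}) = card (?B - {alpha i})"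
    using Inv_right(1)[OF i lx] card_image[OF inj_on_subset[OF refl_inj[OF alpha_nz[OF i]]]] by simp
  { assume p: "ht (x (alpha i)) > 0"
    then have "alpha i \<in> ?A" "alpha i \<notin> ?B" using Inv_right(2,3)[OF i lx] by auto
    moreover have "card ?A = Suc (card (?A - {alpha i}))" using card.remove[OF Inv_fin] calculation by blast
    ultimately show "card ?A = card ?B + 1" using e by simp }
  { assume p: "ht (x (alpha i)) < 0"
    then have "alpha i \<notin> ?A" "alpha i \<in> ?B" using Inv_right(2,3)[OF i lx] by auto
    moreover have "card ?B = Suc (card (?B - {alpha i}))" using card.remove[OF Inv_fin] calculation by blast
    ultimately show "card ?A + 1 = card ?B" using e by simp }
qed

lemma word_snoc: "word alpha (is @ [i]) = word alpha is \<circ> refl (alpha i)"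
  by (simp add: word_append)

lemma deletion:
  assumes "set is \<subseteq> I" "i \<in> I" "ht (word alpha is (alpha i)) < 0"
  shows "\<exists>js. set js \<subseteq> I \<and> length js < length is \<and> word alpha js = word alpha is \<circ> refl (alpha i)"
  using assms
proof (induction "is")
  case Nil then show ?case using ht_alpha by simp
next
  case (Cons k "is")
  let ?x = "word alpha is"
  have k: "k \<in> I" and s: "set is \<subseteq> I" using Cons.prems by auto
  have xR: "?x (alpha i) \<in> R" using word_R[OF s alphaR[OF Cons.prems(2)]] .
  show ?case
  proof (cases "ht (?x (alpha i)) < 0")
    case True
    then obtain js where js: "set js \<subseteq> I" "length js < length is" "word alpha js = ?x \<circ> refl (alpha i)"
      using Cons.IH[OF s Cons.prems(2)] by blast
    then show ?thesis using k by (intro exI[of _ "k # js"]) (auto simp: comp_assoc)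
  next
    case False
    then have "ht (?x (alpha i)) > 0" using ht_nz[OF xR] by linarith
    moreover have "ht (refl (alpha k) (?x (alpha i))) < 0" using Cons.prems(3) by simp
    ultimately have xa: "?x (alpha i) = alpha k" using simple_neg[OF k xR] by blast
    have conj: "\<And>y. refl (alpha k) (?x y) = ?x (refl (alpha i) y)"
      using refl_conj[OF word_linear word_innerI[OF s]] xa by metis
    have "word alpha (k # is) \<circ> refl (alpha i) = ?x"
    proof
      fix y
      have "refl (alpha k) (?x (refl (alpha i) y)) = refl (alpha k) (refl (alpha k) (?x y))"
        using conj by simp
      also have "\<dots> = ?x y" by (rule refl_refl[OF alpha_nz[OF k]])
      finally show "(word alpha (k # is) \<circ> refl (alpha i)) y = ?x y" by simp
    qed
    then have "word alpha is = word alpha (k # is) \<circ> refl (alpha i)" by (rule sym)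
    then show ?thesis
    proof (intro exI[of _ "is"] conjI)
      show "set is \<subseteq> I" using s .
      show "length is < length (k # is)" by simp
    qed
  qed
qed

lemma short_word:
  "set is \<subseteq> I \<Longrightarrow> \<exists>js. set js \<subseteq> I \<and> length js \<le> card (Inv (word alpha is)) \<and> word alpha js = word alpha is"
proof (induction "is" rule: rev_induct)
  case Nil then show ?case by (intro exI[of _ "[]"]) simp
next
  case (snoc i "is")
  have i: "i \<in> I" and s: "set is \<subseteq> I" using snoc.prems by auto
  let ?x = "word alpha is"
  obtain js where js: "set js \<subseteq> I" "length js \<le> card (Inv ?x)" "word alpha js = ?x"
    using snoc.IH[OF s] by blast
  have xR: "?x (alpha i) \<in> R" using word_R[OF s alphaR[OF i]] .
  have ws: "word alpha (is @ [i]) = ?x \<circ> refl (alpha i)" by (rule word_snoc)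
  show ?case
  proof (cases "ht (?x (alpha i)) > 0")
    case True
    then have c: "card (Inv (word alpha (is @ [i]))) = card (Inv ?x) + 1"
      unfolding ws by (rule Inv_right_card(1)[OF i word_linear])
    show ?thesis
    proof (intro exI[of _ "js @ [i]"] conjI)
      show "set (js @ [i]) \<subseteq> I" using js(1) i by simp
      show "length (js @ [i]) \<le> card (Inv (word alpha (is @ [i])))" using c js(2) by simp
      show "word alpha (js @ [i]) = word alpha (is @ [i])" unfolding ws word_snoc js(3) ..
    qed
  next
    case False
    then have neg: "ht (?x (alpha i)) < 0" using ht_nz[OF xR] by linarith
    then have c: "card (Inv (word alpha (is @ [i]))) + 1 = card (Inv ?x)"
      unfolding ws by (rule Inv_right_card(2)[OF i word_linear])
    have "ht (word alpha js (alpha i)) < 0" using neg js(3) by simp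
    then obtain ks where ks: "set ks \<subseteq> I" "length ks < length js" "word alpha ks = word alpha js \<circ> refl (alpha i)"
      using deletion[OF js(1) i] by blast
    show ?thesis
    proof (intro exI[of _ ks] conjI)
      show "set ks \<subseteq> I" by fact
      show "length ks \<le> card (Inv (word alpha (is @ [i])))" using c js(2) ks(2) by simp
      show "word alpha ks = word alpha (is @ [i])" unfolding ws ks(3) js(3) ..
    qed
  qed
qed

lemma wlen_word: "set is \<subseteq> I \<Longrightarrow> wlen alpha I (word alpha is) = card (Inv (word alpha is))"
proof -
  assume s: "set is \<subseteq> I"
  define P where "P n = (\<exists>js. set js \<subseteq> I \<and> length js = n \<and> word alpha is = word alpha js)" for n
  have wl: "wlen alpha I (word alpha is) = (LEAST n. P n)" unfolding wlen_def P_def ..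
  obtain js where js: "set js \<subseteq> I" "length js \<le> card (Inv (word alpha is))" "word alpha js = word alpha is"
    using short_word[OF s] by blast
  have "P (length js)" using js unfolding P_def by auto
  then have le: "(LEAST n. P n) \<le> length js" by (rule Least_le)
  have "P (length is)" using s unfolding P_def by auto
  then have "P (LEAST n. P n)" by (rule LeastI)
  then obtain ms where ms: "set ms \<subseteq> I" "length ms = (LEAST n. P n)" "word alpha is = word alpha ms"
    unfolding P_def by blast
  have "card (Inv (word alpha is)) \<le> length ms" using Inv_le_len[OF ms(1)] ms(3) by simp
  then show ?thesis using le js ms wl by simp
qed

abbreviation W where "W \<equiv> weyl_gen alpha I"

lemma W_iff: "x \<in> weyl_gen alpha K \<longleftrightarrow> (\<exists>is. set is \<subseteq> K \<and> x = word alpha is)"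
  by (auto simp: weyl_gen_def)

lemma W_comp: "x \<in> weyl_gen alpha K \<Longrightarrow> y \<in> weyl_gen alpha K \<Longrightarrow> x \<circ> y \<in> weyl_gen alpha K"
  unfolding W_iff by (metis set_append Un_subset_iff word_append)

lemma W_refl: "i \<in> K \<Longrightarrow> refl (alpha i) \<in> weyl_gen alpha K"
  unfolding W_iff by (intro exI[of _ "[i]"]) auto

lemma W_id: "id \<in> weyl_gen alpha K"
  unfolding W_iff by (intro exI[of _ "[]"]) auto

lemma W_mono: "K \<subseteq> K' \<Longrightarrow> weyl_gen alpha K \<subseteq> weyl_gen alpha K'"
  unfolding weyl_gen_def by auto

lemma W_inv: "K \<subseteq> I \<Longrightarrow> x \<in> weyl_gen alpha K \<Longrightarrow> \<exists>y\<in>weyl_gen alpha K. (\<forall>z. x (y z) = z) \<and> (\<forall>z. y (x z) = z)"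
proof -
  assume K: "K \<subseteq> I" and "x \<in> weyl_gen alpha K"
  then obtain "is" where s: "set is \<subseteq> K" "x = word alpha is" unfolding W_iff by blast
  then have sI: "set is \<subseteq> I" using K by blast
  show ?thesis
  proof (rule bexI[of _ "word alpha (rev is)"])
    show "word alpha (rev is) \<in> weyl_gen alpha K" unfolding W_iff using s(1) by (intro exI[of _ "rev is"]) auto
  qed (use s sI word_inv word_inv2 in auto)
qed

lemma W_linear: "x \<in> W \<Longrightarrow> linear x" using word_linear by (auto simp: W_iff)
lemma W_inner: "x \<in> W \<Longrightarrow> x a \<bullet> x b = a \<bullet> b" using word_innerI by (auto simp: W_iff)
lemma W_R: "x \<in> W \<Longrightarrow> a \<in> R \<Longrightarrow> x a \<in> R" using word_R by (auto simp: W_iff)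
lemma W_image: "x \<in> W \<Longrightarrow> x ` R = R" using word_image by (auto simp: W_iff)
lemma W_inj: "x \<in> W \<Longrightarrow> inj x" using word_inj by (auto simp: W_iff)
lemma W_wlen: "x \<in> W \<Longrightarrow> wlen alpha I x = card (Inv x)" using wlen_word by (auto simp: W_iff)
lemma W_neg: "x \<in> W \<Longrightarrow> x (- a) = - x a" using W_linear linear_neg by blast
lemma W_conj: "x \<in> W \<Longrightarrow> refl (x a) (x y) = x (refl a y)"
  by (rule refl_conj[OF W_linear W_inner])

lemma conj_simple_aux:
  "\<forall>b. b \<in> R \<and> ht b > 0 \<and> nat \<lfloor>ht b\<rfloor> = n \<longrightarrow> (\<exists>y\<in>W. \<exists>i\<in>I. y (alpha i) = b)"
proof (induction n rule: less_induct)
  case (less n)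
  show ?case
  proof (intro allI impI)
    fix b assume b: "b \<in> R \<and> ht b > 0 \<and> nat \<lfloor>ht b\<rfloor> = n"
    show "\<exists>y\<in>W. \<exists>i\<in>I. y (alpha i) = b"
    proof (cases "\<exists>i\<in>I. b = alpha i")
      case True
      then obtain i where "i \<in> I" "b = alpha i" by blast
      then show ?thesis using W_id[of I] by (intro bexI[of _ id]) auto
    next
      case False
      have "\<exists>i\<in>I. b \<bullet> alpha i > 0"
      proof (rule ccontr)
        assume "\<not> ?thesis"
        then have np: "\<forall>i\<in>I. b \<bullet> alpha i \<le> 0" by auto
        obtain c :: "'i \<Rightarrow> int" where c: "\<forall>i\<in>I. c i \<ge> 0" "b = (\<Sum>i\<in>I. of_int (c i) *\<^sub>R alpha i)"
          using pos_rep b by blast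
        have "b \<bullet> b = (\<Sum>i\<in>I. of_int (c i) * (b \<bullet> alpha i))"
          by (subst (2) c(2)) (simp add: inner_sum_right)
        also have "\<dots> \<le> 0" using c(1) np by (intro sum_nonpos) (simp add: mult_nonneg_nonpos)
        finally show False using sqpos b by fastforce
      qed
      then obtain i where i: "i \<in> I" "b \<bullet> alpha i > 0" by blast
      define p where "p = pairing b (alpha i)"
      have pp: "p > 0" using i sqpos[OF alphaR[OF i(1)]] by (simp add: p_def pairing_def)
      have pZ: "p \<in> \<int>" using intpair[OF alphaR[OF i(1)]] b by (simp add: p_def)
      obtain q where q: "p = of_int q" using pZ by (auto elim: Ints_cases)
      have q0: "q > 0" using pp q by simp
      let ?b' = "refl (alpha i) b"
      have b'R: "?b' \<in> R" using reflR_mem alphaR i b by blast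
      have b'p: "ht ?b' > 0" using simple_pos[OF i(1)] b False i by blast
      have htb': "ht ?b' = ht b - p" using ht_alpha[OF i(1)] by (simp add: refl_pairing ht_diff ht_scale p_def)
      obtain k where k: "ht b = of_int k" using ht_int b by (auto elim: Ints_cases)
      have e1: "ht ?b' = of_int (k - q)" using htb' k q by simp
      then have kq: "k - q > 0" using b'p by linarith
      have "nat \<lfloor>ht ?b'\<rfloor> = nat (k - q)" using e1 by simp
      moreover have "nat \<lfloor>ht b\<rfloor> = nat k" using k by simp
      ultimately have "nat \<lfloor>ht ?b'\<rfloor> < n" using b kq q0 by simp
      then obtain y j where y: "y \<in> W" "j \<in> I" "y (alpha j) = ?b'" using less b'R b'p by blast
      have "(refl (alpha i) \<circ> y) (alpha j) = b" using y refl_refl alpha_nz[OF i(1)] by simp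
      moreover have "refl (alpha i) \<circ> y \<in> W" using W_comp W_refl i y by blast
      ultimately show ?thesis using y by blast
    qed
  qed
qed

lemma conj_simple: "b \<in> R \<Longrightarrow> ht b > 0 \<Longrightarrow> \<exists>y\<in>W. \<exists>i\<in>I. y (alpha i) = b"
  using conj_simple_aux by blast

lemma refl_W: "b \<in> R \<Longrightarrow> refl b \<in> W"
proof -
  have pos: "refl b \<in> W" if b: "b \<in> R" "ht b > 0" for b
  proof -
    obtain y i where y: "y \<in> W" "i \<in> I" "y (alpha i) = b" using conj_simple b by blast
    obtain y' where y': "y' \<in> W" "\<forall>z. y (y' z) = z" "\<forall>z. y' (y z) = z" using W_inv[OF order_refl y(1)] by blast
    have "refl b = y \<circ> refl (alpha i) \<circ> y'"
    proof
      fix z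
      have "refl b z = refl (y (alpha i)) (y (y' z))" using y y' by simp
      also have "\<dots> = y (refl (alpha i) (y' z))" using W_conj[OF y(1)] .
      finally show "refl b z = (y \<circ> refl (alpha i) \<circ> y') z" by simp
    qed
    then show ?thesis using W_comp W_refl y y' by metis
  qed
  assume b: "b \<in> R"
  show ?thesis
  proof (cases "ht b > 0")
    case True then show ?thesis using pos b by blast
  next
    case False
    then have "ht (- b) > 0" using ht_nz[OF b] ht_neg by simp
    then have "refl (- b) \<in> W" using pos negR b by blast
    then show ?thesis by (simp add: refl_uminus_root)
  qed
qed

end

locale rsysL = rsys R I alpha for R :: "'a::euclidean_space set" and I :: "'i set" and alpha +
  fixes Lam :: 'a
  assumes dom: "\<forall>i\<in>I. \<exists>m::nat. pairing Lam (alpha i) = real m"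
begin

abbreviation J where "J \<equiv> Jset alpha I Lam"
abbreviation WJ where "WJ \<equiv> weyl_gen alpha J"

lemma J_sub: "J \<subseteq> I" by (auto simp: Jset_def)

lemma dom_ge: "i \<in> I \<Longrightarrow> Lam \<bullet> alpha i \<ge> 0"
proof -
  assume i: "i \<in> I"
  obtain m :: nat where "pairing Lam (alpha i) = real m" using dom i by blast
  then have "2 * (Lam \<bullet> alpha i) / (alpha i \<bullet> alpha i) \<ge> 0" by (simp add: pairing_def)
  then show ?thesis using sqpos[OF alphaR[OF i]] by (simp add: zero_le_divide_iff)
qed

lemma J_iff: "j \<in> J \<longleftrightarrow> j \<in> I \<and> Lam \<bullet> alpha j = 0"
  using sqpos[OF alphaR] by (auto simp: Jset_def pairing_def)

lemma notJ: "i \<in> I \<Longrightarrow> i \<notin> J \<Longrightarrow> Lam \<bullet> alpha i > 0"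
  using dom_ge[of i] J_iff[of i] by linarith

lemma Lam_sum: "Lam \<bullet> (\<Sum>i\<in>I. of_int (c i) *\<^sub>R alpha i) = (\<Sum>i\<in>I. of_int (c i) * (Lam \<bullet> alpha i))"
  by (simp add: inner_sum_right)

lemma Lam_pos: "a \<in> R \<Longrightarrow> ht a > 0 \<Longrightarrow> Lam \<bullet> a \<ge> 0"
proof -
  assume "a \<in> R" "ht a > 0"
  then obtain c :: "'i\<Rightarrow>int" where c: "\<forall>i\<in>I. c i \<ge> 0" "a = (\<Sum>i\<in>I. of_int (c i) *\<^sub>R alpha i)"
    using pos_rep by blast
  show ?thesis unfolding c(2) Lam_sum using c(1) dom_ge by (intro sum_nonneg) simp
qed

lemma Lam_neg: "a \<in> R \<Longrightarrow> ht a < 0 \<Longrightarrow> Lam \<bullet> a \<le> 0"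
proof -
  assume "a \<in> R" "ht a < 0"
  then obtain c :: "'i\<Rightarrow>int" where c: "\<forall>i\<in>I. c i \<le> 0" "a = (\<Sum>i\<in>I. of_int (c i) *\<^sub>R alpha i)"
    using neg_rep by blast
  show ?thesis unfolding c(2) Lam_sum using c(1) dom_ge by (intro sum_nonpos) (simp add: mult_nonpos_nonneg)
qed

lemma Lam_gt_pos: "a \<in> R \<Longrightarrow> Lam \<bullet> a > 0 \<Longrightarrow> ht a > 0"
  using Lam_neg[of a] ht_nz[of a] by linarith

lemma Lam_zero:
  assumes "a \<in> R" "ht a > 0" "Lam \<bullet> a = 0"
  shows "\<exists>c::'i\<Rightarrow>int. (\<forall>i\<in>I. c i \<ge> 0) \<and> (\<forall>i\<in>I. i \<notin> J \<longrightarrow> c i = 0) \<and> a = (\<Sum>i\<in>I. of_int (c i) *\<^sub>R alpha i)"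
proof -
  obtain c :: "'i\<Rightarrow>int" where c: "\<forall>i\<in>I. c i \<ge> 0" "a = (\<Sum>i\<in>I. of_int (c i) *\<^sub>R alpha i)"
    using pos_rep assms by blast
  define f where "f i = real_of_int (c i) * (Lam \<bullet> alpha i)" for i
  have "Lam \<bullet> a = sum f I" unfolding f_def c(2) by (rule Lam_sum)
  then have s0: "sum f I = 0" using assms(3) by linarith
  have nn: "\<forall>i\<in>I. f i \<ge> 0" unfolding f_def using c(1) dom_ge by (simp add: mult_nonneg_nonneg)
  have z0: "\<forall>i\<in>I. f i = 0" using sum_nonneg_eq_0_iff[OF finI, of f] nn s0 by blast
  then have z: "\<forall>i\<in>I. of_int (c i) * (Lam \<bullet> alpha i) = 0" unfolding f_def by blast
  have "\<forall>i\<in>I. i \<notin> J \<longrightarrow> c i = 0"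
  proof (intro ballI impI)
    fix i assume "i \<in> I" "i \<notin> J"
    then show "c i = 0" using z[rule_format, of i] notJ[of i] by simp
  qed
  then show ?thesis using c by blast
qed

lemma WJ_sub: "WJ \<subseteq> W" using W_mono[OF J_sub] .

lemma word_fix: "set is \<subseteq> J \<Longrightarrow> word alpha is Lam = Lam"
proof (induction "is")
  case Nil then show ?case by simp
next
  case (Cons j "is")
  then have "Lam \<bullet> alpha j = 0" using J_iff by auto
  then have "pairing Lam (alpha j) = 0" by (simp add: pairing_def)
  then show ?case using Cons by (simp add: refl_pairing)
qed

lemma WJ_fix: "v \<in> WJ \<Longrightarrow> v Lam = Lam" using word_fix by (auto simp: W_iff)

lemma WJ_fix_inner: "v \<in> WJ \<Longrightarrow> Lam \<bullet> v a = Lam \<bullet> a"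
proof -
  assume v: "v \<in> WJ"
  then have "v \<in> W" using WJ_sub by blast
  then have "v Lam \<bullet> v a = Lam \<bullet> a" by (rule W_inner)
  then show ?thesis by (simp add: WJ_fix[OF v])
qed

lemma sum_J: "(\<forall>i\<in>I. i \<notin> J \<longrightarrow> c i = 0) \<Longrightarrow>
   (\<Sum>i\<in>I. of_int (c i) *\<^sub>R alpha i) = (\<Sum>i\<in>J. of_int (c i) *\<^sub>R alpha i)"
  by (rule sum.mono_neutral_right[OF finI J_sub]) auto

lemma Phi_eq: "pos_roots R I alpha - pos_roots_J R I alpha J = {a \<in> R. Lam \<bullet> a > 0}"
proof
  show "pos_roots R I alpha - pos_roots_J R I alpha J \<subseteq> {a \<in> R. Lam \<bullet> a > 0}"
  proof
    fix a assume a: "a \<in> pos_roots R I alpha - pos_roots_J R I alpha J"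
    then have aR: "a \<in> R" "ht a > 0" by (auto simp: pos_roots_eq)
    have "Lam \<bullet> a \<noteq> 0"
    proof
      assume "Lam \<bullet> a = 0"
      then obtain c :: "'i\<Rightarrow>int" where c: "\<forall>i\<in>I. i \<notin> J \<longrightarrow> c i = 0" "a = (\<Sum>i\<in>I. of_int (c i) *\<^sub>R alpha i)"
        using Lam_zero aR by blast
      then have "a = (\<Sum>i\<in>J. of_int (c i) *\<^sub>R alpha i)" using sum_J by simp
      then have "a \<in> pos_roots_J R I alpha J" using a by (auto simp: pos_roots_J_def)
      then show False using a by simp
    qed
    then show "a \<in> {a \<in> R. Lam \<bullet> a > 0}" using Lam_pos aR by force
  qed
next
  show "{a \<in> R. Lam \<bullet> a > 0} \<subseteq> pos_roots R I alpha - pos_roots_J R I alpha J"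
  proof
    fix a assume a: "a \<in> {a \<in> R. Lam \<bullet> a > 0}"
    then have "a \<in> pos_roots R I alpha" using Lam_gt_pos by (auto simp: pos_roots_eq)
    moreover have "a \<notin> pos_roots_J R I alpha J"
    proof
      assume "a \<in> pos_roots_J R I alpha J"
      then obtain c :: "'i\<Rightarrow>int" where "a = (\<Sum>j\<in>J. of_int (c j) *\<^sub>R alpha j)" by (auto simp: pos_roots_J_def)
      then have "Lam \<bullet> a = (\<Sum>j\<in>J. of_int (c j) * (Lam \<bullet> alpha j))" by (simp add: inner_sum_right)
      also have "\<dots> = 0" using J_iff by (intro sum.neutral) auto
      finally show False using a by simp
    qed
    ultimately show "a \<in> pos_roots R I alpha - pos_roots_J R I alpha J" by blast
  qed
qed

lemma posJ_pos:
  assumes u: "u \<in> W" "\<forall>k\<in>J. ht (u (alpha k)) > 0" and a: "a \<in> R" "ht a > 0" "Lam \<bullet> a = 0"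
  shows "ht (u a) > 0"
proof -
  obtain c :: "'i\<Rightarrow>int" where c: "\<forall>i\<in>I. c i \<ge> 0" "\<forall>i\<in>I. i \<notin> J \<longrightarrow> c i = 0"
    "a = (\<Sum>i\<in>I. of_int (c i) *\<^sub>R alpha i)" using Lam_zero a by blast
  have "u a = (\<Sum>i\<in>I. of_int (c i) *\<^sub>R u (alpha i))"
    unfolding c(3) using W_linear[OF u(1)] by (simp add: linear_sum linear_scale)
  then have "ht (u a) = (\<Sum>i\<in>I. of_int (c i) * ht (u (alpha i)))"
    using ht_linear by (simp add: linear_sum ht_scale)
  also have "\<dots> \<ge> 0"
  proof (intro sum_nonneg)
    fix i assume i: "i \<in> I"
    show "of_int (c i) * ht (u (alpha i)) \<ge> 0"
    proof (cases "i \<in> J")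
      case True
      then have "ht (u (alpha i)) > 0" using u(2) by blast
      moreover have "real_of_int (c i) \<ge> 0" using c(1) i by simp
      ultimately show ?thesis by simp
    next
      case False then show ?thesis using c(2) i by simp
    qed
  qed
  finally show ?thesis using ht_nz[OF W_R[OF u(1) a(1)]] by linarith
qed

definition L :: "('a \<Rightarrow> 'a) \<Rightarrow> nat" where
  "L x = card {a \<in> R. Lam \<bullet> a > 0 \<and> ht (x a) < 0}"

definition N :: "'a \<Rightarrow> nat" where
  "N mu = card {e \<in> R. ht e > 0 \<and> mu \<bullet> e < 0}"

lemma L_N:
  assumes x: "x \<in> W"
  shows "L x = N (x Lam)"
proof -
  let ?A = "{a \<in> R. Lam \<bullet> a > 0 \<and> ht (x a) < 0}" and ?B = "{e \<in> R. ht e > 0 \<and> x Lam \<bullet> e < 0}"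
  have inj: "inj_on (\<lambda>a. - x a) ?A"
    using W_inj[OF x] by (auto simp: inj_on_def inj_def)
  have img: "(\<lambda>a. - x a) ` ?A = ?B"
  proof
    show "(\<lambda>a. - x a) ` ?A \<subseteq> ?B"
    proof
      fix e assume "e \<in> (\<lambda>a. - x a) ` ?A"
      then obtain a where a: "a \<in> R" "Lam \<bullet> a > 0" "ht (x a) < 0" "e = - x a" by blast
      have "e \<in> R" using a W_R[OF x] negR by simp
      moreover have "ht e > 0" using a ht_neg by simp
      moreover have "x Lam \<bullet> e < 0" using a W_inner[OF x] by simp
      ultimately show "e \<in> ?B" by simp
    qed
  next
    show "?B \<subseteq> (\<lambda>a. - x a) ` ?A"
    proof
      fix e assume e: "e \<in> ?B"
      then have "- e \<in> x ` R" using negR W_image[OF x] by simp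
      then obtain a where a: "a \<in> R" "- e = x a" by blast
      have xa: "x a = - e" using a(2) by simp
      have "Lam \<bullet> a = - (x Lam \<bullet> e)" using W_inner[OF x, of Lam a] xa by simp
      then have "Lam \<bullet> a > 0" using e by simp
      moreover have "ht (x a) < 0" using e a ht_neg[of e] by simp
      moreover have "e = - x a" using a(2) by (metis minus_minus)
      ultimately show "e \<in> (\<lambda>a. - x a) ` ?A" using a by blast
    qed
  qed
  show ?thesis unfolding L_def N_def using card_image[OF inj] img by simp
qed

lemma L_le_Inv: "L x \<le> card (Inv x)"
  unfolding L_def Inv_def by (rule card_mono) (use finR Lam_gt_pos in auto)

lemma Inv_eq_L:
  assumes x: "x \<in> W" "\<forall>k\<in>J. ht (x (alpha k)) > 0"
  shows "card (Inv x) = L x"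
proof -
  have "Inv x = {a \<in> R. Lam \<bullet> a > 0 \<and> ht (x a) < 0}"
  proof
    show "Inv x \<subseteq> {a \<in> R. Lam \<bullet> a > 0 \<and> ht (x a) < 0}"
    proof
      fix a assume "a \<in> Inv x"
      then have a: "a \<in> R" "ht a > 0" "ht (x a) < 0" by (auto simp: Inv_def)
      have "Lam \<bullet> a \<noteq> 0" using posJ_pos[OF x a(1,2)] a(3) by force
      then show "a \<in> {a \<in> R. Lam \<bullet> a > 0 \<and> ht (x a) < 0}" using Lam_pos[OF a(1,2)] a by simp
    qed
  qed (use Lam_gt_pos in \<open>auto simp: Inv_def\<close>)
  then show ?thesis by (simp add: L_def)
qed

lemma wlen0: "v \<in> W \<Longrightarrow> wlen alpha I v = 0 \<Longrightarrow> v = id"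
proof -
  assume v: "v \<in> W" and w0: "wlen alpha I v = 0"
  define P where "P n = (\<exists>is. set is \<subseteq> I \<and> length is = n \<and> v = word alpha is)" for n
  obtain js where js: "set js \<subseteq> I" "v = word alpha js" using v by (auto simp: W_iff)
  then have "P (length js)" unfolding P_def by blast
  then have "P (LEAST n. P n)" by (rule LeastI)
  moreover have "(LEAST n. P n) = 0" using w0 unfolding wlen_def P_def .
  ultimately show "v = id" unfolding P_def by auto
qed

abbreviation MR where "MR \<equiv> minreps alpha I J"

lemma MC: "u \<in> MR \<longleftrightarrow> u \<in> W \<and> (\<forall>k\<in>J. ht (u (alpha k)) > 0)"
proof
  assume u: "u \<in> MR"
  then have uW: "u \<in> W" and min: "\<forall>v\<in>WJ. wlen alpha I u \<le> wlen alpha I (u \<circ> v)"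
    by (auto simp: minreps_def)
  have "ht (u (alpha k)) > 0" if k: "k \<in> J" for k
  proof (rule ccontr)
    assume nt: "\<not> ht (u (alpha k)) > 0"
    have kI: "k \<in> I" using k J_sub by blast
    have "ht (u (alpha k)) < 0" using ht_nz[OF W_R[OF uW alphaR[OF kI]]] nt by linarith
    then have c: "card (Inv (u \<circ> refl (alpha k))) + 1 = card (Inv u)"
      by (rule Inv_right_card(2)[OF kI W_linear[OF uW]])
    have sk: "refl (alpha k) \<in> WJ" using W_refl k by blast
    have "u \<circ> refl (alpha k) \<in> W" using W_comp[OF uW W_refl[OF kI]] .
    then have "wlen alpha I (u \<circ> refl (alpha k)) < wlen alpha I u" using c W_wlen uW by simp
    then show False using min sk by force
  qed
  then show "u \<in> W \<and> (\<forall>k\<in>J. ht (u (alpha k)) > 0)" using uW by blast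
next
  assume u: "u \<in> W \<and> (\<forall>k\<in>J. ht (u (alpha k)) > 0)"
  have "wlen alpha I u \<le> wlen alpha I (u \<circ> v)" if v: "v \<in> WJ" for v
  proof -
    have vW: "v \<in> W" using v WJ_sub by blast
    have uvW: "u \<circ> v \<in> W" using W_comp u vW by blast
    have "wlen alpha I u = L u" using W_wlen Inv_eq_L u by simp
    also have "\<dots> = N (u Lam)" using L_N u by blast
    also have "\<dots> = N ((u \<circ> v) Lam)" using WJ_fix[OF v] by simp
    also have "\<dots> = L (u \<circ> v)" using L_N uvW by simp
    also have "\<dots> \<le> card (Inv (u \<circ> v))" by (rule L_le_Inv)
    also have "\<dots> = wlen alpha I (u \<circ> v)" using W_wlen uvW by simp
    finally show ?thesis .
  qed
  then show "u \<in> MR" using u by (auto simp: minreps_def)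
qed

lemma uniq:
  assumes z: "z1 \<in> MR" "z2 \<in> MR" and v: "v \<in> WJ" and e: "z2 = z1 \<circ> v"
  shows "z1 = z2"
proof -
  have z1: "z1 \<in> W" "\<forall>k\<in>J. ht (z1 (alpha k)) > 0" and z2: "z2 \<in> W" "\<forall>k\<in>J. ht (z2 (alpha k)) > 0"
    using z MC by auto
  have vW: "v \<in> W" using v WJ_sub by blast
  have "Inv v = {}"
  proof (rule ccontr)
    assume "Inv v \<noteq> {}"
    then obtain a where a: "a \<in> R" "ht a > 0" "ht (v a) < 0" by (auto simp: Inv_def)
    have vaR: "v a \<in> R" using W_R[OF vW a(1)] .
    have "Lam \<bullet> v a = Lam \<bullet> a" using WJ_fix_inner[OF v] .
    moreover have "Lam \<bullet> a \<ge> 0" using Lam_pos a by blast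
    moreover have "Lam \<bullet> v a \<le> 0" using Lam_neg vaR a by blast
    ultimately have l0: "Lam \<bullet> a = 0" "Lam \<bullet> (- v a) = 0" by auto
    have p2: "ht (z2 a) > 0" using posJ_pos[OF z2 a(1,2) l0(1)] .
    have "ht (z1 (- v a)) > 0" using posJ_pos[OF z1 negR[OF vaR] _ l0(2)] a(3) ht_neg by simp
    moreover have "z2 a = - z1 (- v a)" using e W_neg[OF z1(1)] by simp
    ultimately show False using p2 ht_neg by simp
  qed
  then have "wlen alpha I v = 0" using W_wlen[OF vW] by simp
  then have "v = id" using wlen0 vW by blast
  then show ?thesis using e by simp
qed

lemma exist_aux: "\<forall>y. y \<in> W \<and> card (Inv y) = n \<longrightarrow> (\<exists>v\<in>WJ. y \<circ> v \<in> MR)"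
proof (induction n rule: less_induct)
  case (less n)
  show ?case
  proof (intro allI impI)
    fix y assume y: "y \<in> W \<and> card (Inv y) = n"
    show "\<exists>v\<in>WJ. y \<circ> v \<in> MR"
    proof (cases "\<exists>k\<in>J. ht (y (alpha k)) \<le> 0")
      case True
      then obtain k where k: "k \<in> J" "ht (y (alpha k)) \<le> 0" by blast
      have kI: "k \<in> I" using k J_sub by blast
      have "ht (y (alpha k)) < 0" using ht_nz[OF W_R[OF _ alphaR[OF kI]]] y k by force
      then have c: "card (Inv (y \<circ> refl (alpha k))) + 1 = card (Inv y)"
        using Inv_right_card(2)[OF kI W_linear] y by blast
      have y'W: "y \<circ> refl (alpha k) \<in> W" using W_comp W_refl kI y by blast
      have lt: "card (Inv (y \<circ> refl (alpha k))) < n" using c y by simp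
      have "\<exists>v\<in>WJ. (y \<circ> refl (alpha k)) \<circ> v \<in> MR" using less.IH[OF lt] y'W by blast
      then obtain v' where v': "v' \<in> WJ" "(y \<circ> refl (alpha k)) \<circ> v' \<in> MR" by blast
      have "refl (alpha k) \<circ> v' \<in> WJ" using W_comp W_refl k v' by blast
      moreover have "y \<circ> (refl (alpha k) \<circ> v') \<in> MR" using v' by (simp add: comp_assoc)
      ultimately show ?thesis by blast
    next
      case False
      then have "y \<in> MR" using MC y by force
      then show ?thesis using W_id[of J] by (intro bexI[of _ id]) auto
    qed
  qed
qed

lemma exist: "y \<in> W \<Longrightarrow> \<exists>v\<in>WJ. y \<circ> v \<in> MR"
  using exist_aux by blast

lemma uniq2:
  assumes y: "y \<in> W" and v: "v1 \<in> WJ" "v2 \<in> WJ" and m: "y \<circ> v1 \<in> MR" "y \<circ> v2 \<in> MR"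
  shows "y \<circ> v1 = y \<circ> v2"
proof -
  obtain v1' where v1': "v1' \<in> WJ" "\<forall>z. v1 (v1' z) = z" using W_inv[OF J_sub v(1)] by blast
  have "y \<circ> v2 = (y \<circ> v1) \<circ> (v1' \<circ> v2)" using v1' by (auto simp: fun_eq_iff)
  moreover have "v1' \<circ> v2 \<in> WJ" using W_comp v1' v by blast
  ultimately show ?thesis using uniq m by metis
qed

lemma minrep_spec:
  assumes y: "y \<in> W"
  shows "minrep alpha I J y \<in> MR \<and> (\<exists>v\<in>WJ. minrep alpha I J y = y \<circ> v)"
proof -
  have "\<exists>!u. u \<in> MR \<and> (\<exists>v\<in>WJ. u = y \<circ> v)"
  proof -
    obtain v where v: "v \<in> WJ" "y \<circ> v \<in> MR" using exist[OF y] by blast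
    show ?thesis
    proof (rule ex1I[of _ "y \<circ> v"])
      show "y \<circ> v \<in> MR \<and> (\<exists>v'\<in>WJ. y \<circ> v = y \<circ> v')" using v by blast
      fix u assume "u \<in> MR \<and> (\<exists>v\<in>WJ. u = y \<circ> v)"
      then obtain v' where "v' \<in> WJ" "u = y \<circ> v'" "u \<in> MR" by blast
      then show "u = y \<circ> v" using uniq2[OF y] v by metis
    qed
  qed
  then show ?thesis unfolding minrep_def by (rule theI')
qed

lemma minrep_eq:
  assumes y: "y \<in> W" and z: "z \<in> MR" and v: "v \<in> WJ" and e: "z = y \<circ> v"
  shows "minrep alpha I J y = z"
proof -
  obtain v' where v': "v' \<in> WJ" "minrep alpha I J y = y \<circ> v'" "minrep alpha I J y \<in> MR"
    using minrep_spec[OF y] by blast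
  show ?thesis using uniq2[OF y v'(1) v] v' z e by metis
qed

lemma minrep_Lam: "y \<in> W \<Longrightarrow> minrep alpha I J y Lam = y Lam"
  using minrep_spec WJ_fix by fastforce

lemma MR_W: "u \<in> MR \<Longrightarrow> u \<in> W" using MC by blast

lemma wlen_MR: "u \<in> MR \<Longrightarrow> wlen alpha I u = L u"
  using MC W_wlen Inv_eq_L by force

lemma wlen_minrep: "y \<in> W \<Longrightarrow> wlen alpha I (minrep alpha I J y) = L y"
proof -
  assume y: "y \<in> W"
  have m: "minrep alpha I J y \<in> MR" using minrep_spec[OF y] by blast
  have "wlen alpha I (minrep alpha I J y) = L (minrep alpha I J y)" using wlen_MR[OF m] .
  also have "\<dots> = N (minrep alpha I J y Lam)" using L_N MR_W[OF m] by blast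
  also have "\<dots> = N (y Lam)" using minrep_Lam[OF y] by simp
  also have "\<dots> = L y" using L_N[OF y] by simp
  finally show ?thesis .
qed

lemma card_invol:
  assumes "\<forall>x\<in>A. f x \<in> B" "\<forall>x\<in>B. f x \<in> A" "\<forall>x\<in>A. f (f x) = x" "\<forall>x\<in>B. f (f x) = x"
  shows "card A = card B"
proof -
  have "bij_betw f A B" by (rule bij_betw_byWitness[of A f f]) (use assms in auto)
  then show ?thesis by (rule bij_betw_same_card)
qed

lemma sum_invol:
  assumes "\<forall>x\<in>A. f x \<in> A" "\<forall>x\<in>A. f (f x) = x"
  shows "(\<Sum>x\<in>A. G (f x)) = (\<Sum>x\<in>A. (G x :: real))"
  by (rule sum.reindex_bij_witness[of A f f]) (use assms in auto)

definition sg :: "real \<Rightarrow> real" where "sg t = (if t > 0 then 1 else if t < 0 then -1 else 0)"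

lemma sum_sg: "finite A \<Longrightarrow> (\<Sum>x\<in>A. sg (F x)) = real (card {x\<in>A. F x > 0}) - real (card {x\<in>A. F x < 0})"
proof -
  assume A: "finite A"
  have "(\<Sum>x\<in>A. sg (F x)) = (\<Sum>x\<in>A. (if F x > 0 then 1 else 0) - (if F x < 0 then 1 else 0))"
    by (rule sum.cong) (auto simp: sg_def)
  also have "\<dots> = (\<Sum>x\<in>A. (if F x > 0 then 1 else 0)) - (\<Sum>x\<in>A. (if F x < 0 then 1 else (0::real)))"
    by (simp add: sum_subtractf)
  also have "(\<Sum>x\<in>A. (if F x > 0 then 1 else (0::real))) = (\<Sum>x\<in>{x\<in>A. F x > 0}. 1)"
    using sum.inter_filter[OF A, of "\<lambda>_. (1::real)" "\<lambda>x. F x > 0"] by simp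
  also have "(\<Sum>x\<in>A. (if F x < 0 then 1 else (0::real))) = (\<Sum>x\<in>{x\<in>A. F x < 0}. 1)"
    using sum.inter_filter[OF A, of "\<lambda>_. (1::real)" "\<lambda>x. F x < 0"] by simp
  finally show ?thesis by simp
qed

lemma N_diff:
  assumes bR: "b \<in> R" and bp: "ht b > 0"
  shows "real (N (refl b mu)) - real (N mu) =
         (\<Sum>t\<in>{t \<in> R. ht t > 0 \<and> ht (refl b t) < 0}. sg (mu \<bullet> t))"
proof -
  let ?r = "refl b"
  have bn: "b \<noteq> 0" using nzR bR by blast
  let ?P1 = "{t \<in> R. ht t > 0 \<and> ht (?r t) > 0}" and ?P2 = "{t \<in> R. ht t > 0 \<and> ht (?r t) < 0}"
  have rR: "\<And>t. t \<in> R \<Longrightarrow> ?r t \<in> R" using reflR_mem bR by blast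
  have rr: "\<And>t. ?r (?r t) = t" using refl_refl[OF bn] .
  have fin1: "finite ?P1" and fin2: "finite ?P2" using finR by auto
  have split: "{t \<in> R. ht t > 0 \<and> Q t} = {t \<in> ?P1. Q t} \<union> {t \<in> ?P2. Q t}" for Q
  proof (rule set_eqI)
    fix t
    have "t \<in> R \<Longrightarrow> ht (?r t) \<noteq> 0" using ht_nz rR by blast
    then show "t \<in> {t \<in> R. ht t > 0 \<and> Q t} \<longleftrightarrow> t \<in> {t \<in> ?P1. Q t} \<union> {t \<in> ?P2. Q t}"
      by (auto simp del: ht_nz)
  qed
  have cN: "card {t \<in> R. ht t > 0 \<and> Q t} = card {t \<in> ?P1. Q t} + card {t \<in> ?P2. Q t}" for Q
  proof -
    have "finite {t \<in> ?P1. Q t}" "finite {t \<in> ?P2. Q t}" "{t \<in> ?P1. Q t} \<inter> {t \<in> ?P2. Q t} = {}"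
      using finR by auto
    then show ?thesis unfolding split[of Q] by (rule card_Un_disjoint)
  qed
  have c1: "card {t \<in> ?P1. mu \<bullet> ?r t < 0} = card {t \<in> ?P1. mu \<bullet> t < 0}"
  proof (rule card_invol[of _ ?r])
    show "\<forall>x\<in>{t \<in> ?P1. mu \<bullet> ?r t < 0}. ?r x \<in> {t \<in> ?P1. mu \<bullet> t < 0}" using rr rR by simp
    show "\<forall>x\<in>{t \<in> ?P1. mu \<bullet> t < 0}. ?r x \<in> {t \<in> ?P1. mu \<bullet> ?r t < 0}" using rr rR by simp
  qed (simp_all add: rr)
  have c2: "card {t \<in> ?P2. mu \<bullet> ?r t < 0} = card {t \<in> ?P2. mu \<bullet> t > 0}"
  proof (rule card_invol[of _ "\<lambda>t. - ?r t"])
    show "\<forall>x\<in>{t \<in> ?P2. mu \<bullet> ?r t < 0}. - ?r x \<in> {t \<in> ?P2. mu \<bullet> t > 0}"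
      using rr rR negR by (simp add: refl_minus ht_neg)
    show "\<forall>x\<in>{t \<in> ?P2. mu \<bullet> t > 0}. - ?r x \<in> {t \<in> ?P2. mu \<bullet> ?r t < 0}"
      using rr rR negR by (simp add: refl_minus ht_neg)
  qed (simp_all add: rr refl_minus)
  have "N (?r mu) = card {t \<in> R. ht t > 0 \<and> mu \<bullet> ?r t < 0}"
    unfolding N_def by (simp add: refl_sym)
  also have "\<dots> = card {t \<in> ?P1. mu \<bullet> ?r t < 0} + card {t \<in> ?P2. mu \<bullet> ?r t < 0}" by (rule cN)
  finally have e1: "N (?r mu) = card {t \<in> ?P1. mu \<bullet> t < 0} + card {t \<in> ?P2. mu \<bullet> t > 0}"
    using c1 c2 by simp
  have e2: "N mu = card {t \<in> ?P1. mu \<bullet> t < 0} + card {t \<in> ?P2. mu \<bullet> t < 0}"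
    unfolding N_def by (rule cN)
  show ?thesis using e1 e2 sum_sg[OF fin2, of "\<lambda>t. mu \<bullet> t"] by simp
qed

lemma P2_simple: "i \<in> I \<Longrightarrow> {t \<in> R. ht t > 0 \<and> ht (refl (alpha i) t) < 0} = {alpha i}"
proof -
  assume i: "i \<in> I"
  have an: "alpha i \<noteq> 0" using alpha_nz i by blast
  have "ht (refl (alpha i) (alpha i)) < 0" using refl_self[OF an] ht_neg ht_alpha[OF i] by simp
  then show ?thesis using simple_neg[OF i] alphaR[OF i] ht_alpha[OF i] by auto
qed

lemma N_simple: "i \<in> I \<Longrightarrow> real (N (refl (alpha i) mu)) = real (N mu) + sg (mu \<bullet> alpha i)"
  using N_diff[OF alphaR, of i mu] P2_simple[of i] ht_alpha[of i] by simp

lemma N_claimB: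
  assumes bR: "b \<in> R" and bp: "ht b > 0" and mb: "mu \<bullet> b > 0"
  shows "real (N (refl b mu)) \<ge> real (N mu) + 1"
proof -
  let ?r = "refl b" and ?P2 = "{t \<in> R. ht t > 0 \<and> ht (refl b t) < 0}"
  let ?s = "\<lambda>t. - ?r t"
  have bn: "b \<noteq> 0" using nzR bR by blast
  have rR: "\<And>t. t \<in> R \<Longrightarrow> ?r t \<in> R" using reflR_mem bR by blast
  have rr: "\<And>t. ?r (?r t) = t" using refl_refl[OF bn] .
  have sP2: "\<forall>t\<in>?P2. ?s t \<in> ?P2" by (auto simp: rr rR negR refl_minus ht_neg)
  have ss: "\<forall>t\<in>?P2. ?s (?s t) = t" by (simp add: rr refl_minus)
  have fin2: "finite ?P2" using finR by auto
  define S where "S = (\<Sum>t\<in>?P2. sg (mu \<bullet> t))"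
  have S2: "(\<Sum>t\<in>?P2. sg (mu \<bullet> ?s t)) = S"
    unfolding S_def by (rule sum_invol[OF sP2 ss, of "\<lambda>t. sg (mu \<bullet> t)"])
  have nn: "\<forall>t\<in>?P2. sg (mu \<bullet> t) + sg (mu \<bullet> ?s t) \<ge> 0"
  proof
    fix t assume t: "t \<in> ?P2"
    define p where "p = pairing t b"
    have rt: "?r t = t - p *\<^sub>R b" by (simp add: refl_pairing p_def)
    have "ht (?r t) = ht t - p * ht b" using rt by (simp add: ht_diff ht_scale)
    then have "p * ht b > 0" using t by simp
    then have pp: "p > 0" using bp by (simp add: zero_less_mult_iff)
    have "mu \<bullet> t + mu \<bullet> ?s t = p * (mu \<bullet> b)" using rt by (simp add: inner_diff_right)
    also have "\<dots> > 0" using pp mb by simp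
    finally show "sg (mu \<bullet> t) + sg (mu \<bullet> ?s t) \<ge> 0" by (auto simp: sg_def)
  qed
  have bP2: "b \<in> ?P2" using bR bp refl_self[OF bn] ht_neg by simp
  have sb: "?s b = b" using refl_self[OF bn] by simp
  have "2 * S = (\<Sum>t\<in>?P2. sg (mu \<bullet> t) + sg (mu \<bullet> ?s t))" using S2 by (simp add: sum.distrib S_def)
  also have "\<dots> \<ge> sg (mu \<bullet> b) + sg (mu \<bullet> ?s b)"
    by (rule member_le_sum[OF bP2]) (use nn fin2 in auto)
  finally have "2 * S \<ge> 2" using sb mb by (simp add: sg_def)
  then show ?thesis using N_diff[OF bR bp, of mu] S_def by simp
qed

lemma L_refl:
  assumes x: "x \<in> W" and bR: "b \<in> R"
  shows "L (x \<circ> refl b) = N (refl (x b) (x Lam))"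
proof -
  have "x \<circ> refl b \<in> W" using W_comp x refl_W bR by blast
  then have "L (x \<circ> refl b) = N ((x \<circ> refl b) Lam)" by (rule L_N)
  also have "(x \<circ> refl b) Lam = refl (x b) (x Lam)" using W_conj[OF x] by simp
  finally show ?thesis .
qed

lemma L_sj:
  assumes x: "x \<in> W" and j: "j \<in> I"
  shows "real (L (refl (alpha j) \<circ> x)) = real (L x) + sg (x Lam \<bullet> alpha j)"
proof -
  have "refl (alpha j) \<circ> x \<in> W" using W_comp W_refl j x by blast
  then have "L (refl (alpha j) \<circ> x) = N (refl (alpha j) (x Lam))" using L_N by simp
  then show ?thesis using N_simple[OF j, of "x Lam"] L_N[OF x] by simp
qed

lemma claimB:
  assumes x: "x \<in> W" and bR: "b \<in> R" and lb: "Lam \<bullet> b > 0" and xb: "ht (x b) > 0"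
  shows "real (L (x \<circ> refl b)) \<ge> real (L x) + 1"
proof -
  have "x Lam \<bullet> x b > 0" using W_inner[OF x] lb by simp
  then have "real (N (refl (x b) (x Lam))) \<ge> real (N (x Lam)) + 1"
    using N_claimB[OF W_R[OF x bR] xb] by blast
  then show ?thesis using L_refl[OF x bR] L_N[OF x] by simp
qed

lemma claimA:
  assumes bR: "b \<in> R" and lb: "Lam \<bullet> b > 0"
  shows "real (L x) - real (L (x \<circ> refl b)) \<le> (\<Sum>a\<in>{a \<in> R. Lam \<bullet> a > 0}. pairing a b) - 1"
proof -
  define r where "r = refl b"
  define Phi where "Phi = {a \<in> R. Lam \<bullet> a > 0}"
  define P1 where "P1 = {a \<in> R. Lam \<bullet> a > 0 \<and> Lam \<bullet> r a > 0}"
  define P2 where "P2 = {a \<in> R. Lam \<bullet> a > 0 \<and> Lam \<bullet> r a \<le> 0}"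
  have bn: "b \<noteq> 0" using nzR bR by blast
  have rR: "\<And>t. t \<in> R \<Longrightarrow> r t \<in> R" unfolding r_def using reflR_mem bR by blast
  have rr: "\<And>t. r (r t) = t" unfolding r_def using refl_refl[OF bn] .
  have P1i: "a \<in> P1 \<longleftrightarrow> a \<in> R \<and> Lam \<bullet> a > 0 \<and> Lam \<bullet> r a > 0" for a unfolding P1_def by blast
  have P2i: "a \<in> P2 \<longleftrightarrow> a \<in> R \<and> Lam \<bullet> a > 0 \<and> Lam \<bullet> r a \<le> 0" for a unfolding P2_def by blast
  have fin: "finite Phi" "finite P1" "finite P2"
    unfolding Phi_def P1_def P2_def using finR by simp_all
  have un: "Phi = P1 \<union> P2" unfolding Phi_def P1_def P2_def by auto
  have dj: "P1 \<inter> P2 = {}" unfolding P1_def P2_def by auto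
  have Lsplit: "L y = card {a \<in> P1. ht (y a) < 0} + card {a \<in> P2. ht (y a) < 0}" for y
  proof -
    have e: "{a \<in> R. Lam \<bullet> a > 0 \<and> ht (y a) < 0} = {a \<in> P1. ht (y a) < 0} \<union> {a \<in> P2. ht (y a) < 0}"
      unfolding P1_def P2_def by auto
    have f: "finite {a \<in> P1. ht (y a) < 0}" "finite {a \<in> P2. ht (y a) < 0}" using fin by simp_all
    have d: "{a \<in> P1. ht (y a) < 0} \<inter> {a \<in> P2. ht (y a) < 0} = {}" using dj by blast
    show ?thesis unfolding L_def e by (rule card_Un_disjoint[OF f d])
  qed
  have c1: "card {a \<in> P1. ht (x (r a)) < 0} = card {a \<in> P1. ht (x a) < 0}"
  proof (rule card_invol[of _ r])
    show "\<forall>a\<in>{a \<in> P1. ht (x (r a)) < 0}. r a \<in> {a \<in> P1. ht (x a) < 0}" using rr rR P1i by simp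
    show "\<forall>a\<in>{a \<in> P1. ht (x a) < 0}. r a \<in> {a \<in> P1. ht (x (r a)) < 0}" using rr rR P1i by simp
  qed (simp_all add: rr)
  have c2: "card {a \<in> P2. ht (x a) < 0} \<le> card P2" by (rule card_mono[OF fin(3)]) blast
  have "L (x \<circ> refl b) = card {a \<in> P1. ht (x (r a)) < 0} + card {a \<in> P2. ht (x (r a)) < 0}"
    using Lsplit[of "x \<circ> r"] unfolding r_def by simp
  then have diff: "real (L x) - real (L (x \<circ> refl b)) \<le> real (card P2)"
    using Lsplit[of x] c1 c2 by simp
  have s1: "(\<Sum>a\<in>P1. pairing a b) = 0"
  proof -
    have inv1: "\<forall>a\<in>P1. r a \<in> P1" "\<forall>a\<in>P1. r (r a) = a" using rr rR P1i by simp_all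
    have "(\<Sum>a\<in>P1. pairing (r a) b) = (\<Sum>a\<in>P1. pairing a b)"
      by (rule sum_invol[OF inv1, of "\<lambda>a. pairing a b"])
    moreover have "(\<Sum>a\<in>P1. pairing (r a) b) = - (\<Sum>a\<in>P1. pairing a b)"
      unfolding r_def by (simp add: pairing_refl[OF bn] sum_negf)
    ultimately show ?thesis by simp
  qed
  have bP2: "b \<in> P2" using bR lb refl_self[OF bn] P2i unfolding r_def by simp
  have ge: "pairing a b \<ge> 1 + (if a = b then 1 else 0)" if a: "a \<in> P2" for a
  proof (cases "a = b")
    case True then show ?thesis using sqpos[OF bR] by (simp add: pairing_def)
  next
    case False
    have a2: "a \<in> R" "Lam \<bullet> a > 0" "Lam \<bullet> r a \<le> 0" using a P2i by blast+
    have "Lam \<bullet> r a = Lam \<bullet> a - pairing a b * (Lam \<bullet> b)"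
      using refl_inner_left[of b a Lam] unfolding r_def by (simp add: inner_commute)
    then have "pairing a b * (Lam \<bullet> b) > 0" using a2 by linarith
    then have pp: "pairing a b > 0" using lb by (simp add: zero_less_mult_iff)
    have "pairing a b \<in> \<int>" using intpair[OF bR a2(1)] .
    then obtain k where k: "pairing a b = of_int k" by (auto elim: Ints_cases)
    then have "k > 0" using pp by simp
    then show ?thesis using k False by simp
  qed
  have "(\<Sum>a\<in>P2. pairing a b) \<ge> (\<Sum>a\<in>P2. 1 + (if a = b then 1 else (0::real)))"
    by (rule sum_mono) (use ge in blast)
  also have "(\<Sum>a\<in>P2. 1 + (if a = b then 1 else (0::real))) = real (card P2) + 1"
    using bP2 fin(3) by (simp add: sum.distrib)
  finally have s2: "(\<Sum>a\<in>P2. pairing a b) \<ge> real (card P2) + 1" .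
  have "(\<Sum>a\<in>Phi. pairing a b) = (\<Sum>a\<in>P1. pairing a b) + (\<Sum>a\<in>P2. pairing a b)"
    unfolding un by (rule sum.union_disjoint[OF fin(2,3) dj])
  then show ?thesis using s1 s2 diff unfolding Phi_def by simp
qed

lemma K_eq:
  "2 * pairing (rho R I alpha - rho_J R I alpha J) b = (\<Sum>a\<in>{a \<in> R. Lam \<bullet> a > 0}. pairing a b)"
proof -
  have fp: "finite (pos_roots R I alpha)" using finR by (simp add: pos_roots_def)
  have sub: "pos_roots_J R I alpha J \<subseteq> pos_roots R I alpha" by (auto simp: pos_roots_J_def)
  have "rho R I alpha - rho_J R I alpha J = (1/2) *\<^sub>R (\<Sum>a\<in>pos_roots R I alpha - pos_roots_J R I alpha J. a)"
    unfolding rho_def rho_J_def sum_diff[OF fp sub] by (simp add: scaleR_diff_right)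
  also have "\<dots> = (1/2) *\<^sub>R (\<Sum>a\<in>{a \<in> R. Lam \<bullet> a > 0}. a)" using Phi_eq by simp
  finally have e: "rho R I alpha - rho_J R I alpha J = (1/2) *\<^sub>R (\<Sum>a\<in>{a \<in> R. Lam \<bullet> a > 0}. a)" .
  show ?thesis unfolding e pairing_def
    by (simp add: inner_sum_left sum_divide_distrib sum_distrib_left)
qed

lemma pairing_pos: "a \<in> R \<Longrightarrow> pairing m a > 0 \<longleftrightarrow> m \<bullet> a > 0"
proof -
  assume a: "a \<in> R"
  define d where "d = 2 / (a \<bullet> a)"
  have c: "d > 0" using sqpos[OF a] unfolding d_def by simp
  have "pairing m a = (m \<bullet> a) * d" unfolding pairing_def d_def by simp
  then show ?thesis using c by (simp add: zero_less_mult_iff)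
qed

lemma pairing_neg: "a \<in> R \<Longrightarrow> pairing m a < 0 \<longleftrightarrow> m \<bullet> a < 0"
proof -
  assume a: "a \<in> R"
  define d where "d = 2 / (a \<bullet> a)"
  have c: "d > 0" using sqpos[OF a] unfolding d_def by simp
  have "pairing m a = (m \<bullet> a) * d" unfolding pairing_def d_def by simp
  then show ?thesis using c by (simp add: mult_less_0_iff)
qed

lemma pairing_nonpos: "a \<in> R \<Longrightarrow> pairing m a \<le> 0 \<longleftrightarrow> m \<bullet> a \<le> 0"
  using pairing_pos[of a m] by linarith

lemma pairing_nonneg: "a \<in> R \<Longrightarrow> pairing m a \<ge> 0 \<longleftrightarrow> m \<bullet> a \<ge> 0"
  using pairing_neg[of a m] by linarith

lemma MR_left:
  assumes u: "u \<in> MR" and j: "j \<in> I" and nz: "u Lam \<bullet> alpha j \<noteq> 0"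
  shows "refl (alpha j) \<circ> u \<in> MR"
proof -
  have uW: "u \<in> W" and up: "\<forall>k\<in>J. ht (u (alpha k)) > 0" using u MC by auto
  have "ht (refl (alpha j) (u (alpha k))) > 0" if k: "k \<in> J" for k
  proof -
    have kI: "k \<in> I" using k J_sub by blast
    have "u (alpha k) \<noteq> alpha j"
    proof
      assume e: "u (alpha k) = alpha j"
      have "u Lam \<bullet> alpha j = Lam \<bullet> alpha k" using W_inner[OF uW, of Lam "alpha k"] e by simp
      also have "\<dots> = 0" using k J_iff by blast
      finally show False using nz by simp
    qed
    then show ?thesis using simple_pos[OF j W_R[OF uW alphaR[OF kI]]] up k by blast
  qed
  moreover have "refl (alpha j) \<circ> u \<in> W" using W_comp W_refl j uW by blast
  ultimately show ?thesis using MC by simp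
qed

lemma transfer:
  assumes w: "w \<in> MR" and bR: "b \<in> R" and lb: "Lam \<bullet> b > 0" and j: "j \<in> I"
    and E: "wlen alpha I (minrep alpha I J (w \<circ> refl b)) = wlen alpha I w + 1 \<or>
      real (wlen alpha I (minrep alpha I J (w \<circ> refl b))) = real (wlen alpha I w)
          - 2 * pairing (rho R I alpha - rho_J R I alpha J) b + 1"
    and nz: "w Lam \<bullet> alpha j \<noteq> 0"
    and same: "sg (w Lam \<bullet> alpha j) = sg ((w \<circ> refl b) Lam \<bullet> alpha j)"
  shows "refl (alpha j) \<circ> minrep alpha I J (w \<circ> refl b) \<in> MR \<and> refl (alpha j) \<circ> w \<in> MR \<and>
    pqbg_edge R I alpha J (refl (alpha j) \<circ> w) b (refl (alpha j) \<circ> minrep alpha I J (w \<circ> refl b))"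
proof -
  define y where "y = w \<circ> refl b"
  define u where "u = minrep alpha I J y"
  define sj where "sj = refl (alpha j)"
  define sgn where "sgn = sg (w Lam \<bullet> alpha j)"
  have wW: "w \<in> W" using w MR_W by blast
  have yW: "y \<in> W" unfolding y_def using W_comp wW refl_W bR by blast
  obtain v where v: "v \<in> WJ" "u = y \<circ> v" and uMR: "u \<in> MR" using minrep_spec[OF yW] unfolding u_def by blast
  have uW: "u \<in> W" using uMR MR_W by blast
  have uL: "u Lam = y Lam" using minrep_Lam[OF yW] unfolding u_def .
  have ynz: "y Lam \<bullet> alpha j \<noteq> 0" using same nz unfolding y_def by (auto simp: sg_def split: if_splits)
  have unz: "u Lam \<bullet> alpha j \<noteq> 0" using ynz uL by simp
  have m1: "sj \<circ> u \<in> MR" unfolding sj_def using MR_left[OF uMR j unz] .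
  have m2: "sj \<circ> w \<in> MR" unfolding sj_def using MR_left[OF w j nz] .
  have sjW: "sj \<in> W" unfolding sj_def using W_refl j by blast
  have y'W: "(sj \<circ> w) \<circ> refl b \<in> W" using W_comp sjW wW refl_W bR by blast
  have mr: "minrep alpha I J ((sj \<circ> w) \<circ> refl b) = sj \<circ> u"
    by (rule minrep_eq[OF y'W m1 v(1)]) (simp add: v(2) y_def comp_assoc)
  have Lu: "wlen alpha I u = L y" unfolding u_def using wlen_minrep[OF yW] .
  have Lw: "wlen alpha I w = L w" using wlen_MR[OF w] .
  have l1: "real (wlen alpha I (sj \<circ> u)) = real (L y) + sgn"
  proof -
    have "real (wlen alpha I (sj \<circ> u)) = real (L (sj \<circ> u))" using wlen_MR[OF m1] by simp
    also have "\<dots> = real (L u) + sg (u Lam \<bullet> alpha j)" unfolding sj_def by (rule L_sj[OF uW j])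
    also have "L u = L y" using wlen_MR[OF uMR] Lu by simp
    finally show ?thesis using uL same unfolding sgn_def y_def by (simp add: comp_def)
  qed
  have l2: "real (wlen alpha I (sj \<circ> w)) = real (L w) + sgn"
  proof -
    have "real (wlen alpha I (sj \<circ> w)) = real (L (sj \<circ> w))" using wlen_MR[OF m2] by simp
    also have "\<dots> = real (L w) + sg (w Lam \<bullet> alpha j)" unfolding sj_def by (rule L_sj[OF wW j])
    finally show ?thesis unfolding sgn_def .
  qed
  have E': "real (L y) = real (L w) + 1 \<or>
      real (L y) = real (L w) - 2 * pairing (rho R I alpha - rho_J R I alpha J) b + 1"
    using E Lu Lw unfolding u_def y_def by (auto simp: of_nat_add)
  have E'': "wlen alpha I (sj \<circ> u) = wlen alpha I (sj \<circ> w) + 1 \<or>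
      real (wlen alpha I (sj \<circ> u)) = real (wlen alpha I (sj \<circ> w))
          - 2 * pairing (rho R I alpha - rho_J R I alpha J) b + 1"
  proof (cases "real (L y) = real (L w) + 1")
    case True
    then have "real (wlen alpha I (sj \<circ> u)) = real (wlen alpha I (sj \<circ> w) + 1)" using l1 l2 by simp
    then have "wlen alpha I (sj \<circ> u) = wlen alpha I (sj \<circ> w) + 1" by (simp only: of_nat_eq_iff)
    then show ?thesis by blast
  next
    case False
    then show ?thesis using E' l1 l2 by simp
  qed
  have bpos: "b \<in> pos_roots R I alpha - pos_roots_J R I alpha J" using Phi_eq bR lb by simp
  have "pqbg_edge R I alpha J (sj \<circ> w) b (sj \<circ> u)"
    unfolding pqbg_edge_def using m2 bpos mr E'' by simp
  then show ?thesis using m1 m2 unfolding sj_def u_def y_def by simp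
qed

lemma sg_pos: "t > 0 \<Longrightarrow> sg t = 1" by (simp add: sg_def)
lemma sg_neg: "t < 0 \<Longrightarrow> sg t = -1" by (simp add: sg_def)
lemma sg_le: "t \<le> 0 \<Longrightarrow> sg t \<le> 0" by (simp add: sg_def)
lemma sg_ge: "t \<ge> 0 \<Longrightarrow> sg t \<ge> 0" by (simp add: sg_def)

lemma main:
  assumes w: "w \<in> MR" and b: "b \<in> pos_roots R I alpha - pos_roots_J R I alpha J"
    and edge: "pqbg_edge R I alpha J w b (minrep alpha I J (w \<circ> refl b))"
    and j: "j \<in> I"
  shows
   "(pairing (w Lam) (alpha j) > 0 \<and> w b \<noteq> alpha j \<and> w b \<noteq> - alpha j \<longrightarrow>
       pairing ((w \<circ> refl b) Lam) (alpha j) > 0 \<and>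
       refl (alpha j) \<circ> minrep alpha I J (w \<circ> refl b) \<in> MR \<and>
       refl (alpha j) \<circ> w \<in> MR \<and>
       pqbg_edge R I alpha J (refl (alpha j) \<circ> w) b
          (refl (alpha j) \<circ> minrep alpha I J (w \<circ> refl b)))
  \<and> (pairing ((w \<circ> refl b) Lam) (alpha j) < 0 \<and> w b \<noteq> alpha j \<and> w b \<noteq> - alpha j \<longrightarrow>
       pairing (w Lam) (alpha j) < 0 \<and>
       refl (alpha j) \<circ> minrep alpha I J (w \<circ> refl b) \<in> MR \<and>
       refl (alpha j) \<circ> w \<in> MR \<and>
       pqbg_edge R I alpha J (refl (alpha j) \<circ> w) b
          (refl (alpha j) \<circ> minrep alpha I J (w \<circ> refl b)))
  \<and> (pairing ((w \<circ> refl b) Lam) (alpha j) < 0 \<and> pairing (w Lam) (alpha j) \<ge> 0 \<longrightarrow>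
       w b = alpha j \<or> w b = - alpha j)
  \<and> (pairing ((w \<circ> refl b) Lam) (alpha j) \<le> 0 \<and> pairing (w Lam) (alpha j) > 0 \<longrightarrow>
       w b = alpha j \<or> w b = - alpha j)"
proof -
  let ?y = "w \<circ> refl b"
  let ?sj = "refl (alpha j)"
  have bR: "b \<in> R" and lb: "Lam \<bullet> b > 0" using b Phi_eq by auto
  have bn: "b \<noteq> 0" using nzR bR by blast
  have aR: "alpha j \<in> R" using alphaR j by blast
  have E: "wlen alpha I (minrep alpha I J ?y) = wlen alpha I w + 1 \<or>
      real (wlen alpha I (minrep alpha I J ?y)) = real (wlen alpha I w)
          - 2 * pairing (rho R I alpha - rho_J R I alpha J) b + 1"
    using edge unfolding pqbg_edge_def by blast
  define K where "K = (\<Sum>a\<in>{a \<in> R. Lam \<bullet> a > 0}. pairing a b)"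
  have wW: "w \<in> W" using w MR_W by blast
  have yW: "?y \<in> W" using W_comp wW refl_W bR by blast
  have sjW: "?sj \<in> W" using W_refl j by blast
  have sjwW: "?sj \<circ> w \<in> W" using W_comp sjW wW by blast
  have E': "real (L ?y) = real (L w) + 1 \<or> real (L ?y) = real (L w) - K + 1"
    using E wlen_minrep[OF yW] wlen_MR[OF w] K_eq[of b] unfolding K_def by auto
  have sjw: "real (L (?sj \<circ> w)) = real (L w) + sg (w Lam \<bullet> alpha j)" by (rule L_sj[OF wW j])
  have sjy: "real (L (?sj \<circ> ?y)) = real (L ?y) + sg (?y Lam \<bullet> alpha j)" by (rule L_sj[OF yW j])
  have sjy2: "?sj \<circ> ?y = (?sj \<circ> w) \<circ> refl b" by (simp add: comp_assoc)
  have CA: "real (L (?sj \<circ> w)) - real (L (?sj \<circ> ?y)) \<le> K - 1"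
    using claimA[OF bR lb, of "?sj \<circ> w"] sjy2 unfolding K_def by simp
  have BP: "ht (w b) > 0" if h: "real (L ?y) = real (L w) + 1"
  proof (rule ccontr)
    assume n: "\<not> ht (w b) > 0"
    have wbR: "w b \<in> R" using W_R[OF wW bR] .
    then have "ht (w b) < 0" using ht_nz[OF wbR] n by linarith
    moreover have "?y b = - w b" using refl_self[OF bn] W_neg[OF wW] by simp
    ultimately have "ht (?y b) > 0" using ht_neg by simp
    then have "real (L (?y \<circ> refl b)) \<ge> real (L ?y) + 1" using claimB[OF yW bR lb] by blast
    moreover have "?y \<circ> refl b = w" by (auto simp: fun_eq_iff refl_refl[OF bn])
    ultimately show False using h by simp
  qed
  have CB: "real (L (?sj \<circ> ?y)) \<ge> real (L (?sj \<circ> w)) + 1" if h: "ht (w b) > 0" "w b \<noteq> alpha j"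
  proof -
    have "ht (?sj (w b)) > 0" using simple_pos[OF j W_R[OF wW bR] h] .
    then have "ht ((?sj \<circ> w) b) > 0" by simp
    then have "real (L ((?sj \<circ> w) \<circ> refl b)) \<ge> real (L (?sj \<circ> w)) + 1" using claimB[OF sjwW bR lb] by blast
    then show ?thesis using sjy2 by simp
  qed
  have S1: "?y Lam \<bullet> alpha j > 0" if p: "w Lam \<bullet> alpha j > 0" and nb: "w b \<noteq> alpha j"
  proof (rule ccontr)
    assume "\<not> ?y Lam \<bullet> alpha j > 0"
    then have g: "sg (?y Lam \<bullet> alpha j) \<le> 0" using sg_le by simp
    have g1: "sg (w Lam \<bullet> alpha j) = 1" using sg_pos p by simp
    from E' show False
    proof
      assume h: "real (L ?y) = real (L w) + 1"
      then show False using CB[OF BP[OF h] nb] sjw sjy g g1 by linarith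
    next
      assume h: "real (L ?y) = real (L w) - K + 1"
      then show False using CA sjw sjy g g1 by linarith
    qed
  qed
  have S2: "w Lam \<bullet> alpha j < 0" if p: "?y Lam \<bullet> alpha j < 0" and nb: "w b \<noteq> alpha j"
  proof (rule ccontr)
    assume "\<not> w Lam \<bullet> alpha j < 0"
    then have g: "sg (w Lam \<bullet> alpha j) \<ge> 0" using sg_ge by simp
    have g1: "sg (?y Lam \<bullet> alpha j) = -1" using sg_neg p by simp
    from E' show False
    proof
      assume h: "real (L ?y) = real (L w) + 1"
      then show False using CB[OF BP[OF h] nb] sjw sjy g g1 by linarith
    next
      assume h: "real (L ?y) = real (L w) - K + 1"
      then show False using CA sjw sjy g g1 by linarith
    qed
  qed
  have P1: "pairing (?y Lam) (alpha j) > 0 \<and>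
       ?sj \<circ> minrep alpha I J ?y \<in> MR \<and> ?sj \<circ> w \<in> MR \<and>
       pqbg_edge R I alpha J (?sj \<circ> w) b (?sj \<circ> minrep alpha I J ?y)"
    if h: "pairing (w Lam) (alpha j) > 0" "w b \<noteq> alpha j" for dummy :: bool
  proof -
    have p: "w Lam \<bullet> alpha j > 0" using h pairing_pos[OF aR] by blast
    have q: "?y Lam \<bullet> alpha j > 0" using S1[OF p h(2)] .
    have "sg (w Lam \<bullet> alpha j) = sg (?y Lam \<bullet> alpha j)" using p q sg_pos by simp
    then have "?sj \<circ> minrep alpha I J ?y \<in> MR \<and> ?sj \<circ> w \<in> MR \<and>
       pqbg_edge R I alpha J (?sj \<circ> w) b (?sj \<circ> minrep alpha I J ?y)"
      using transfer[OF w bR lb j E] p by simp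
    then show ?thesis using q pairing_pos[OF aR] by blast
  qed
  have P2: "pairing (w Lam) (alpha j) < 0 \<and>
       ?sj \<circ> minrep alpha I J ?y \<in> MR \<and> ?sj \<circ> w \<in> MR \<and>
       pqbg_edge R I alpha J (?sj \<circ> w) b (?sj \<circ> minrep alpha I J ?y)"
    if h: "pairing (?y Lam) (alpha j) < 0" "w b \<noteq> alpha j" for dummy :: bool
  proof -
    have q: "?y Lam \<bullet> alpha j < 0" using h pairing_neg[OF aR] by blast
    have p: "w Lam \<bullet> alpha j < 0" using S2[OF q h(2)] .
    have "sg (w Lam \<bullet> alpha j) = sg (?y Lam \<bullet> alpha j)" using p q sg_neg by simp
    then have "?sj \<circ> minrep alpha I J ?y \<in> MR \<and> ?sj \<circ> w \<in> MR \<and>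
       pqbg_edge R I alpha J (?sj \<circ> w) b (?sj \<circ> minrep alpha I J ?y)"
      using transfer[OF w bR lb j E] p by simp
    then show ?thesis using p pairing_neg[OF aR] by blast
  qed
  have P3: "w b = alpha j" if h: "pairing (?y Lam) (alpha j) < 0" "pairing (w Lam) (alpha j) \<ge> 0"
  proof (rule ccontr)
    assume "w b \<noteq> alpha j"
    then have "w Lam \<bullet> alpha j < 0" using S2 h(1) pairing_neg[OF aR] by blast
    then show False using h(2) pairing_nonneg[OF aR] by simp
  qed
  have P4: "w b = alpha j" if h: "pairing (?y Lam) (alpha j) \<le> 0" "pairing (w Lam) (alpha j) > 0"
  proof (rule ccontr)
    assume "w b \<noteq> alpha j"
    then have "?y Lam \<bullet> alpha j > 0" using S1 h(2) pairing_pos[OF aR] by blast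
    then show False using h(1) pairing_nonpos[OF aR] by simp
  qed
  show ?thesis using P1 P2 P3 P4 by blast
qed

end

theorem lemma4p4:
  fixes R :: "'a::euclidean_space set" and I :: "'i set" and alpha :: "'i \<Rightarrow> 'a"
    and Lam :: 'a and w :: "'a \<Rightarrow> 'a" and b :: 'a and j :: 'i
  assumes rs: "root_system R" and irr: "irreducible_rs R"
    and base: "is_base R I alpha"
    and dom: "\<forall>i\<in>I. \<exists>m::nat. pairing Lam (alpha i) = real m"
    and w: "w \<in> minreps alpha I (Jset alpha I Lam)"
    and b: "b \<in> pos_roots R I alpha - pos_roots_J R I alpha (Jset alpha I Lam)"
    and edge: "pqbg_edge R I alpha (Jset alpha I Lam) w b
                 (minrep alpha I (Jset alpha I Lam) (w \<circ> refl b))"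
    and j: "j \<in> I"
  shows
   "(pairing (w Lam) (alpha j) > 0 \<and> w b \<noteq> alpha j \<and> w b \<noteq> - alpha j \<longrightarrow>
       pairing ((w \<circ> refl b) Lam) (alpha j) > 0 \<and>
       refl (alpha j) \<circ> minrep alpha I (Jset alpha I Lam) (w \<circ> refl b) \<in> minreps alpha I (Jset alpha I Lam) \<and>
       refl (alpha j) \<circ> w \<in> minreps alpha I (Jset alpha I Lam) \<and>
       pqbg_edge R I alpha (Jset alpha I Lam) (refl (alpha j) \<circ> w) b
          (refl (alpha j) \<circ> minrep alpha I (Jset alpha I Lam) (w \<circ> refl b)))
  \<and> (pairing ((w \<circ> refl b) Lam) (alpha j) < 0 \<and> w b \<noteq> alpha j \<and> w b \<noteq> - alpha j \<longrightarrow>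
       pairing (w Lam) (alpha j) < 0 \<and>
       refl (alpha j) \<circ> minrep alpha I (Jset alpha I Lam) (w \<circ> refl b) \<in> minreps alpha I (Jset alpha I Lam) \<and>
       refl (alpha j) \<circ> w \<in> minreps alpha I (Jset alpha I Lam) \<and>
       pqbg_edge R I alpha (Jset alpha I Lam) (refl (alpha j) \<circ> w) b
          (refl (alpha j) \<circ> minrep alpha I (Jset alpha I Lam) (w \<circ> refl b)))
  \<and> (pairing ((w \<circ> refl b) Lam) (alpha j) < 0 \<and> pairing (w Lam) (alpha j) \<ge> 0 \<longrightarrow>
       w b = alpha j \<or> w b = - alpha j)
  \<and> (pairing ((w \<circ> refl b) Lam) (alpha j) \<le> 0 \<and> pairing (w Lam) (alpha j) > 0 \<longrightarrow>
       w b = alpha j \<or> w b = - alpha j)"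
proof -
  interpret L: rsysL R I alpha Lam
    by unfold_locales (rule rs, rule base, rule dom)
  show ?thesis using L.main[OF w b edge j] .
qed

end
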